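(* The Equality Shortest Path problem is undecidable.
   Context: A multidimensional shortest path game consists of a finite arena with vertex set $V$, edges $E\subseteq V\times V$ (each vertex has a successor), two players Eve and Adam owning a partition $V_E\uplus V_A$ of $V$, $t$ weight functions $w_i:E\to\mathbb{Z}$, and a single target set $T\subseteq V$. For a play $\pi=\pi_0\pi_1\dots$, $\mathrm{cost}(\pi)=(+\infty,\dots,+\infty)$ if $\pi$ never visits $T$, and otherwise $\mathrm{cost}(\pi)=(\mathrm{cost}_1(\pi),\dots,\mathrm{cost}_t(\pi))$ with $\mathrm{cost}_i(\pi)=\sum_{k=1}^{\ell}w_i((\pi_{k-1},\pi_k))$ where $\ell$ is the least index with $\pi_\ell\in T$. The Equality Shortest Path problem asks, given such a game, an initial vertex $v_0$ and a threshold $\bar c\in\mathbb{Z}^t$, whether Eve has a strategy $\sigma_E$ such that for every strategy $\sigma_A$ of Adam, the outcome play from $v_0$ satisfies $\mathrm{cost}(\mathrm{out}(\sigma_E,\sigma_A))=\bar c$. *)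

theory Defs
  imports Main "HOL-Library.Nat_Bijection"
begin

datatype recf =
    Z
  | S
  | Id nat
  | Cn recf "recf list"
  | Pr recf recf
  | Mn recf

inductive eval :: "recf \<Rightarrow> nat list \<Rightarrow> nat \<Rightarrow> bool" where
  eval_Z: "eval Z xs 0"
| eval_S: "eval S [x] (Suc x)"
| eval_Id: "i < length xs \<Longrightarrow> eval (Id i) xs (xs ! i)"
| eval_Cn: "length ys = length gs \<Longrightarrow> (\<forall>i < length gs. eval (gs ! i) xs (ys ! i))
            \<Longrightarrow> eval f ys z \<Longrightarrow> eval (Cn f gs) xs z"
| eval_Pr0: "eval f xs y \<Longrightarrow> eval (Pr f g) (0 # xs) y"
| eval_PrS: "eval (Pr f g) (n # xs) y \<Longrightarrow> eval g (n # y # xs) z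
            \<Longrightarrow> eval (Pr f g) (Suc n # xs) z"
| eval_Mn: "eval f (n # xs) 0 \<Longrightarrow> (\<forall>m < n. \<exists>y. eval f (m # xs) y \<and> y \<noteq> 0)
            \<Longrightarrow> eval (Mn f) xs n"

definition decidable_set :: "nat set \<Rightarrow> bool" where
  "decidable_set L \<longleftrightarrow>
     (\<exists>f. \<forall>x. (x \<in> L \<longrightarrow> eval f [x] 0) \<and> (x \<notin> L \<longrightarrow> eval f [x] 1))"

text \<open>Vertices are 0..<num_v. owner ! v = True means v belongs to Eve.
  Each edge (u, v, ws) carries its weight vector ws (length = dimension t).\<close>
record sp_instance =
  num_v :: nat
  owner :: "bool list"
  edges :: "(nat \<times> nat \<times> int list) list"
  target :: "nat list"
  init :: nat
  thr :: "int list"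

definition dim :: "sp_instance \<Rightarrow> nat" where
  "dim I = length (thr I)"

definition edge_set :: "sp_instance \<Rightarrow> (nat \<times> nat) set" where
  "edge_set I = {(u, v). \<exists>ws. (u, v, ws) \<in> set (edges I)}"

definition well_formed :: "sp_instance \<Rightarrow> bool" where
  "well_formed I \<longleftrightarrow>
     length (owner I) = num_v I
   \<and> (\<forall>(u, v, ws) \<in> set (edges I). u < num_v I \<and> v < num_v I \<and> length ws = dim I)
   \<and> distinct (map (\<lambda>(u, v, ws). (u, v)) (edges I))
   \<and> (\<forall>u < num_v I. \<exists>v. (u, v) \<in> edge_set I)
   \<and> (\<forall>x \<in> set (target I). x < num_v I)
   \<and> init I < num_v I"

definition weight :: "sp_instance \<Rightarrow> nat \<Rightarrow> nat \<Rightarrow> nat \<Rightarrow> int" where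
  "weight I i u v = (THE ws. (u, v, ws) \<in> set (edges I)) ! i"

definition is_Eve :: "sp_instance \<Rightarrow> nat \<Rightarrow> bool" where
  "is_Eve I v \<longleftrightarrow> owner I ! v"

definition strategy_Eve :: "sp_instance \<Rightarrow> (nat list \<Rightarrow> nat) \<Rightarrow> bool" where
  "strategy_Eve I \<sigma> \<longleftrightarrow> (\<forall>h. h \<noteq> [] \<longrightarrow> last h < num_v I \<longrightarrow> is_Eve I (last h)
        \<longrightarrow> (last h, \<sigma> h) \<in> edge_set I)"

definition strategy_Adam :: "sp_instance \<Rightarrow> (nat list \<Rightarrow> nat) \<Rightarrow> bool" where
  "strategy_Adam I \<sigma> \<longleftrightarrow> (\<forall>h. h \<noteq> [] \<longrightarrow> last h < num_v I \<longrightarrow> \<not> is_Eve I (last h)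
        \<longrightarrow> (last h, \<sigma> h) \<in> edge_set I)"

fun out_hist :: "sp_instance \<Rightarrow> (nat list \<Rightarrow> nat) \<Rightarrow> (nat list \<Rightarrow> nat) \<Rightarrow> nat \<Rightarrow> nat \<Rightarrow> nat list" where
  "out_hist I \<sigma>E \<sigma>A v0 0 = [v0]"
| "out_hist I \<sigma>E \<sigma>A v0 (Suc k) =
     (let h = out_hist I \<sigma>E \<sigma>A v0 k
      in h @ [if is_Eve I (last h) then \<sigma>E h else \<sigma>A h])"

definition outcome :: "sp_instance \<Rightarrow> (nat list \<Rightarrow> nat) \<Rightarrow> (nat list \<Rightarrow> nat) \<Rightarrow> nat \<Rightarrow> (nat \<Rightarrow> nat)" where
  "outcome I \<sigma>E \<sigma>A v0 k = last (out_hist I \<sigma>E \<sigma>A v0 k)"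

text \<open>Cost of a play: None stands for (+inf, ..., +inf) (target never reached);
  otherwise the vector of the sums of the weights up to the first visit of T.\<close>
definition cost :: "sp_instance \<Rightarrow> (nat \<Rightarrow> nat) \<Rightarrow> int list option" where
  "cost I \<pi> =
     (if \<exists>l. \<pi> l \<in> set (target I)
      then (let l = (LEAST l. \<pi> l \<in> set (target I))
            in Some (map (\<lambda>i. \<Sum>k = 1..l. weight I i (\<pi> (k - 1)) (\<pi> k)) [0..<dim I]))
      else None)"

definition Eve_wins_equality :: "sp_instance \<Rightarrow> bool" where
  "Eve_wins_equality I \<longleftrightarrow>
     (\<exists>\<sigma>E. strategy_Eve I \<sigma>E \<and>
        (\<forall>\<sigma>A. strategy_Adam I \<sigma>A \<longrightarrow> cost I (outcome I \<sigma>E \<sigma>A (init I)) = Some (thr I)))"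

definition enc_ints :: "int list \<Rightarrow> nat" where
  "enc_ints xs = list_encode (map int_encode xs)"

definition encode_instance :: "sp_instance \<Rightarrow> nat" where
  "encode_instance I = list_encode
     [ num_v I,
       list_encode (map (\<lambda>b. if b then 1 else 0) (owner I)),
       list_encode (map (\<lambda>(u, v, ws). list_encode [u, v, enc_ints ws]) (edges I)),
       list_encode (target I),
       init I,
       enc_ints (thr I) ]"

definition EqualitySP :: "nat set" where
  "EqualitySP = {encode_instance I | I. well_formed I \<and> Eve_wins_equality I}"

end

theory Submission
  imports Defs
begin



inductive_cases ZE: "eval Z xs y"
inductive_cases SE: "eval S xs y"
inductive_cases IdE: "eval (Id i) xs y"
inductive_cases CnE: "eval (Cn f gs) xs y"
inductive_cases PrE: "eval (Pr f g) xs y"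
inductive_cases MnE: "eval (Mn f) xs y"

lemma eval_det: "eval f xs y \<Longrightarrow> eval f xs y' \<Longrightarrow> y = y'"
proof (induction arbitrary: y' rule: eval.induct)
  case (eval_Z xs) then show ?case by (auto elim: ZE)
next
  case (eval_S x) then show ?case by (auto elim: SE)
next
  case (eval_Id i xs) then show ?case by (auto elim: IdE)
next
  case (eval_Cn ys gs xs f z)
  from eval_Cn.prems obtain ys' where l: "length ys' = length gs"
    and a: "\<forall>i<length gs. eval (gs ! i) xs (ys' ! i)" and b: "eval f ys' y'"
    by (cases rule: CnE) auto
  have h: "\<forall>i<length gs. \<forall>y'. eval (gs!i) xs y' \<longrightarrow> ys!i = y'" using eval_Cn by blast
  have "ys' = ys"
  proof (rule nth_equalityI)
    show "length ys' = length ys" using l eval_Cn by simp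
    fix i assume "i < length ys'"
    then show "ys' ! i = ys ! i" using l a h by (metis)
  qed
  then show ?case using eval_Cn.IH b by blast
next
  case (eval_Pr0 f xs y g)
  from eval_Pr0.prems show ?case by (cases rule: PrE) (use eval_Pr0.IH in auto)
next
  case (eval_PrS f g n xs y z)
  from eval_PrS.prems obtain y1 where "eval (Pr f g) (n # xs) y1" "eval g (n # y1 # xs) y'"
    by (cases rule: PrE) auto
  then show ?case using eval_PrS.IH by blast
next
  case (eval_Mn f n xs)
  from eval_Mn.prems obtain n' where n': "n' = y'" "eval f (n' # xs) 0"
     "\<forall>m<n'. \<exists>y. eval f (m # xs) y \<and> y \<noteq> 0"
    by (cases rule: MnE) auto
  show ?case
  proof (rule ccontr)
    assume "n \<noteq> y'"
    then consider "n < n'" | "n' < n" using n' by linarith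
    then show False
    proof cases
      case 1 then obtain y where "eval f (n # xs) y" "y \<noteq> 0" using n' by blast
      then show False using eval_Mn.IH(1) by blast
    next
      case 2 then obtain y where "eval f (n' # xs) y \<and> (\<forall>y'. eval f (n' # xs) y' \<longrightarrow> y = y')" "y \<noteq> 0"
        using eval_Mn.IH(2) by blast
      then show False using n' by blast
    qed
  qed
qed

lemma eval_Cn1: "eval g xs y \<Longrightarrow> eval f [y] z \<Longrightarrow> eval (Cn f [g]) xs z"
  by (rule eval_Cn[where ys="[y]"]) (auto simp: less_Suc_eq)
lemma eval_Cn2: "eval g1 xs ya \<Longrightarrow> eval g2 xs yb \<Longrightarrow> eval f [ya, yb] z \<Longrightarrow> eval (Cn f [g1, g2]) xs z"
  by (rule eval_Cn[where ys="[ya, yb]"]) (auto simp: less_Suc_eq)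

lemma eval_Idi: "i < length xs \<Longrightarrow> xs ! i = y \<Longrightarrow> eval (Id i) xs y" using eval_Id by auto
lemma eval_Id0: "eval (Id 0) (x # xs) x" using eval_Id[of 0 "x#xs"] by simp
lemma eval_Id1: "eval (Id (Suc 0)) (x # y # xs) y" using eval_Id[of 1 "x#y#xs"] by simp
lemma eval_S': "y = Suc x \<Longrightarrow> eval S [x] y" using eval_S by simp

definition "rpred = Pr Z (Id 0)"
lemma eval_rpred: "eval rpred [x] (x - 1)"
  unfolding rpred_def
proof (induction x)
  case 0 then show ?case by (auto intro!: eval.intros)
next
  case (Suc x) then show ?case by (auto intro!: eval_PrS eval_Id0)
qed
lemma eval_rpred': "y = x - 1 \<Longrightarrow> eval rpred [x] y" using eval_rpred by simp

definition "msub0 = Pr (Id 0) (Cn rpred [Id 1])"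
lemma eval_msub0: "eval msub0 [k, x] (x - k)"
proof (induction k)
  case 0 then show ?case unfolding msub0_def by (auto intro!: eval.intros eval_Id0)
next
  case (Suc k)
  have "eval (Cn rpred [Id 1]) [k, x - k, x] (x - k - 1)"
    by (rule eval_Cn1) (auto intro: eval_Id1 eval_rpred')
  then have "eval g [k, x - k, x] (x - Suc k)" if "g = Cn rpred [Id 1]" for g using that by simp
  then show ?case using Suc unfolding msub0_def by (auto intro: eval_PrS)
qed

definition "msub = Cn msub0 [Id 1, Id 0]"
lemma eval_msub: "eval msub [x, k] (x - k)"
  unfolding msub_def by (rule eval_Cn2) (auto intro: eval_Id0 eval_Id1 eval_msub0)

definition "radd0 = Pr (Id 0) (Cn S [Id 1])"
lemma eval_radd0: "eval radd0 [k, x] (x + k)"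
proof (induction k)
  case 0 then show ?case unfolding radd0_def by (auto intro!: eval.intros eval_Id0)
next
  case (Suc k)
  have "eval (Cn S [Id 1]) [k, x + k, x] (Suc (x + k))"
    by (rule eval_Cn1) (auto intro: eval_Id1 eval_S)
  then show ?case using Suc unfolding radd0_def by (auto intro: eval_PrS)
qed

definition "radd = Cn radd0 [Id 1, Id 0]"
lemma eval_radd: "eval radd [x, k] (x + k)"
  unfolding radd_def by (rule eval_Cn2) (auto intro: eval_Id0 eval_Id1 eval_radd0)
lemma eval_radd': "z = x + k \<Longrightarrow> eval radd [x, k] z" using eval_radd by simp

definition "rtri = Pr Z (Cn radd [Id 1, Cn S [Id 0]])"
lemma eval_rtri: "eval rtri [n] (triangle n)"
proof (induction n)
  case 0 then show ?case unfolding rtri_def by (auto intro!: eval.intros)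
next
  case (Suc n)
  have "eval (Cn radd [Id 1, Cn S [Id 0]]) [n, triangle n] (triangle n + Suc n)"
    by (rule eval_Cn2[where ya="triangle n" and yb="Suc n"])
       (auto intro!: eval_Id1 eval_radd' eval_Cn1 eval_Id0 eval_S)
  then show ?case using Suc unfolding rtri_def by (auto intro: eval_PrS)
qed

definition "rpe = Cn radd [Cn rtri [Cn radd [Id 0, Id 1]], Id 0]"
lemma eval_rpe: "eval rpe [a, b] (prod_encode (a, b))"
proof -
  have "eval (Cn radd [Id 0, Id 1]) [a, b] (a + b)"
    by (rule eval_Cn2) (auto intro: eval_Id0 eval_Id1 eval_radd)
  then have "eval (Cn rtri [Cn radd [Id 0, Id 1]]) [a, b] (triangle (a + b))"
    by (rule eval_Cn1) (rule eval_rtri)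
  then show ?thesis unfolding rpe_def prod_encode_def
    by (auto intro!: eval_Cn2 eval_Id0 eval_radd)
qed



lemma triangle_ge: "n \<le> triangle n"
  by (induction n) auto

lemma triangle_mono: "m \<le> n \<Longrightarrow> triangle m \<le> triangle n"
  by (induction n) (auto simp: le_Suc_eq)

definition "dsel z = (LEAST s. z < triangle (Suc s))"

lemma dsel_props: "triangle (dsel z) \<le> z \<and> z < triangle (Suc (dsel z))"
proof -
  have ex: "z < triangle (Suc z)" using triangle_ge[of "Suc z"] by simp
  have 1: "z < triangle (Suc (dsel z))" unfolding dsel_def by (rule LeastI[of _ z]) (rule ex)
  have 2: "triangle (dsel z) \<le> z"
  proof (cases "dsel z")
    case 0 then show ?thesis by simp
  next
    case (Suc s)
    then have "s < (LEAST s. z < triangle (Suc s))" unfolding dsel_def by simp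
    then have "\<not> z < triangle (Suc s)" by (rule not_less_Least)
    then show ?thesis using Suc by simp
  qed
  show ?thesis using 1 2 by blast
qed

lemma prod_decode_dsel: "prod_decode z = (z - triangle (dsel z), dsel z - (z - triangle (dsel z)))"
proof -
  let ?s = "dsel z" let ?a = "z - triangle ?s"
  have "?a \<le> ?s" using dsel_props[of z] by (simp only: triangle_Suc) arith
  then have "prod_encode (?a, ?s - ?a) = z" using dsel_props[of z] by (simp add: prod_encode_def)
  then show ?thesis by (metis prod_encode_inverse)
qed

definition "rdselh = Cn msub [Cn S [Id 1], Cn rtri [Cn S [Id 0]]]"
lemma eval_rdselh: "eval rdselh [s, z] (Suc z - triangle (Suc s))"
  unfolding rdselh_def
proof (rule eval_Cn2[where ya="Suc z" and yb="triangle (Suc s)"])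
  show "eval (Cn S [Id 1]) [s, z] (Suc z)" by (rule eval_Cn1[OF eval_Idi eval_S]) simp_all
  show "eval (Cn rtri [Cn S [Id 0]]) [s, z] (triangle (Suc s))"
    by (rule eval_Cn1[OF eval_Cn1[OF eval_Id0 eval_S] eval_rtri])
  show "eval msub [Suc z, triangle (Suc s)] (Suc z - triangle (Suc s))" by (rule eval_msub)
qed

definition "rdsel = Mn rdselh"
lemma eval_rdsel: "eval rdsel [z] (dsel z)"
  unfolding rdsel_def
proof (rule eval_Mn)
  show "eval rdselh [dsel z, z] 0" using eval_rdselh[of "dsel z" z] dsel_props[of z] by simp
  show "\<forall>m<dsel z. \<exists>y. eval rdselh [m, z] y \<and> y \<noteq> 0"
  proof (intro allI impI)
    fix m assume "m < dsel z"
    then have "\<not> z < triangle (Suc m)" unfolding dsel_def using not_less_Least by blast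
    then show "\<exists>y. eval rdselh [m, z] y \<and> y \<noteq> 0" using eval_rdselh[of m z] by auto
  qed
qed

definition "rfst = Cn msub [Id 0, Cn rtri [rdsel]]"
lemma eval_rfst: "eval rfst [z] (fst (prod_decode z))"
  unfolding rfst_def prod_decode_dsel
  by (auto intro!: eval_Cn2 eval_Cn1 eval_Id0 eval_rtri eval_rdsel eval_msub)

definition "rsnd = Cn msub [rdsel, rfst]"
lemma eval_rsnd: "eval rsnd [z] (snd (prod_decode z))"
  using eval_rfst[of z] unfolding rsnd_def prod_decode_dsel
  by (auto intro!: eval_Cn2 eval_rdsel eval_msub)

definition "hdc z = fst (prod_decode (z - 1))"
definition "tlc z = snd (prod_decode (z - 1))"
definition "consc x z = Suc (prod_encode (x, z))"

lemma hdc_enc[simp]: "hdc (list_encode (x # xs)) = x" by (simp add: hdc_def)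
lemma tlc_enc[simp]: "tlc (list_encode (x # xs)) = list_encode xs" by (simp add: tlc_def)
lemma consc_enc[simp]: "consc x (list_encode xs) = list_encode (x # xs)" by (simp add: consc_def)

definition "rhd = Cn rfst [Cn rpred [Id 0]]"
lemma eval_rhd: "eval rhd [z] (hdc z)"
  unfolding rhd_def hdc_def by (auto intro!: eval_Cn1 eval_rpred eval_Id0 eval_rfst)
definition "rtl = Cn rsnd [Cn rpred [Id 0]]"
lemma eval_rtl: "eval rtl [z] (tlc z)"
  unfolding rtl_def tlc_def by (auto intro!: eval_Cn1 eval_rpred eval_Id0 eval_rsnd)
definition "rcons = Cn S [rpe]"
lemma eval_rcons: "eval rcons [x, z] (consc x z)"
  unfolding rcons_def consc_def by (auto intro!: eval_Cn1 eval_rpe eval_S)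

definition "rfun e = (let t1 = tlc e; t2 = tlc t1; t3 = tlc t2; t4 = tlc t3; t5 = tlc t4 in
   consc (hdc e) (consc (hdc t1) (consc (hdc t2) (consc (hdc t3) (consc (hdc t4)
     (consc (consc (e + e) (tlc (hdc t5))) 0))))))"

fun rTl :: "nat \<Rightarrow> recf" where
  "rTl 0 = Id 0"
| "rTl (Suc k) = Cn rtl [rTl k]"

lemma eval_rTl: "eval (rTl k) [e] ((tlc ^^ k) e)"
  by (induction k) (auto intro!: eval_Cn1 eval_rtl eval_Id0)

definition "rF = Cn rcons [Cn rhd [rTl 0], Cn rcons [Cn rhd [rTl 1], Cn rcons [Cn rhd [rTl 2],
   Cn rcons [Cn rhd [rTl 3], Cn rcons [Cn rhd [rTl 4], Cn rcons [
     Cn rcons [Cn radd [Id 0, Id 0], Cn rtl [Cn rhd [rTl 5]]], Z]]]]]]"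

lemma eval_rF: "eval rF [e] (rfun e)"
proof -
  have h: "eval (Cn rhd [rTl k]) [e] (hdc ((tlc ^^ k) e))" for k
    by (auto intro!: eval_Cn1 eval_rhd eval_rTl)
  have a: "eval (Cn rcons [Cn radd [Id 0, Id 0], Cn rtl [Cn rhd [rTl 5]]]) [e]
     (consc (e + e) (tlc (hdc ((tlc ^^ 5) e))))"
    by (rule eval_Cn2[OF eval_Cn2[OF eval_Id0 eval_Id0 eval_radd] eval_Cn1[OF h[of 5] eval_rtl] eval_rcons])
  have b: "eval (Cn rcons [Cn rcons [Cn radd [Id 0, Id 0], Cn rtl [Cn rhd [rTl 5]]], Z]) [e]
     (consc (consc (e + e) (tlc (hdc ((tlc ^^ 5) e)))) 0)"
    by (rule eval_Cn2[OF a]) (auto intro!: eval_rcons eval_Z)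
  show ?thesis unfolding rF_def rfun_def Let_def
    apply (rule eval_Cn2[OF h[of 0]])
     apply (rule eval_Cn2[OF h[of 1]])
      apply (rule eval_Cn2[OF h[of 2]])
       apply (rule eval_Cn2[OF h[of 3]])
        apply (rule eval_Cn2[OF h[of 4]])
         apply (rule b)
    by (auto simp: numeral_eq_Suc intro!: eval_rcons)
qed

lemma consc_0: "consc y 0 = list_encode [y]" by (simp add: consc_def)

lemma rfun_enc: assumes H: "e = list_encode [a0, a1, a2, a3, a4, list_encode (x # xs)]"
  shows "rfun e = list_encode [a0, a1, a2, a3, a4, list_encode ((e + e) # xs)]"
proof -
  have 1: "hdc e = a0" "tlc e = list_encode [a1, a2, a3, a4, list_encode (x # xs)]"
    by (simp only: H hdc_enc tlc_enc)+
  show ?thesis unfolding rfun_def Let_def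
    by (simp only: 1 hdc_enc tlc_enc consc_enc consc_0)
qed




datatype instr = Inc nat nat | Dec nat nat nat

type_synonym config = "nat \<times> (nat \<Rightarrow> nat)"

definition step :: "instr list \<Rightarrow> config \<Rightarrow> config" where
  "step p c = (let (pc, R) = c in if pc < length p then
     (case p ! pc of Inc r j \<Rightarrow> (j, R(r := Suc (R r)))
        | Dec r jz jnz \<Rightarrow> (if R r = 0 then (jz, R) else (jnz, R(r := R r - 1))))
     else (pc, R))"

definition runs :: "instr list \<Rightarrow> config \<Rightarrow> config \<Rightarrow> bool" where
  "runs p c c' \<longleftrightarrow> (\<exists>t. (step p ^^ t) c = c')"

lemma runs_refl: "runs p c c" unfolding runs_def by (rule exI[of _ 0]) simp

lemma runs_trans: "runs p c1 c2 \<Longrightarrow> runs p c2 c3 \<Longrightarrow> runs p c1 c3"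
  unfolding runs_def by (metis funpow_add comp_apply)

lemma runs_step: "step p c1 = c2 \<Longrightarrow> runs p c2 c3 \<Longrightarrow> runs p c1 c3"
  unfolding runs_def by (metis funpow_Suc_right comp_apply)

definition at :: "instr list \<Rightarrow> nat \<Rightarrow> instr list \<Rightarrow> bool" where
  "at p b code \<longleftrightarrow> (\<forall>i<length code. b + i < length p \<and> p ! (b + i) = code ! i)"

lemma at_append: "at p b (c1 @ c2) \<longleftrightarrow> at p b c1 \<and> at p (b + length c1) c2"
proof
  assume H: "at p b (c1 @ c2)"
  show "at p b c1 \<and> at p (b + length c1) c2"
  proof
    show "at p b c1" unfolding at_def
    proof (intro allI impI)
      fix i assume "i < length c1"
      then show "b + i < length p \<and> p ! (b + i) = c1 ! i" using H[unfolded at_def, rule_format, of i]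
        by (simp add: nth_append)
    qed
    show "at p (b + length c1) c2" unfolding at_def
    proof (intro allI impI)
      fix i assume "i < length c2"
      then show "b + length c1 + i < length p \<and> p ! (b + length c1 + i) = c2 ! i"
        using H[unfolded at_def, rule_format, of "length c1 + i"]
        by (simp add: nth_append add.assoc)
    qed
  qed
next
  assume H: "at p b c1 \<and> at p (b + length c1) c2"
  show "at p b (c1 @ c2)" unfolding at_def
  proof (intro allI impI)
    fix i assume i: "i < length (c1 @ c2)"
    show "b + i < length p \<and> p ! (b + i) = (c1 @ c2) ! i"
    proof (cases "i < length c1")
      case True then show ?thesis using H unfolding at_def by (simp add: nth_append)
    next
      case False
      then obtain j where j: "i = length c1 + j" by (metis le_Suc_ex not_less)
      then have "j < length c2" using i by simp
      then show ?thesis using H j unfolding at_def by (simp add: nth_append add.assoc)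
    qed
  qed
qed

lemma at_Cons: "at p b (x # xs) \<longleftrightarrow> b < length p \<and> p ! b = x \<and> at p (Suc b) xs"
  using at_append[of p b "[x]" xs] unfolding at_def by auto

lemma step_Inc: "at p b code \<Longrightarrow> i < length code \<Longrightarrow> code ! i = Inc r j \<Longrightarrow>
   step p (b + i, R) = (j, R(r := Suc (R r)))"
  unfolding at_def step_def by auto

lemma step_Dec0: "at p b code \<Longrightarrow> i < length code \<Longrightarrow> code ! i = Dec r jz jnz \<Longrightarrow> R r = 0 \<Longrightarrow>
   step p (b + i, R) = (jz, R)"
  unfolding at_def step_def by auto

lemma step_Dec1: "at p b code \<Longrightarrow> i < length code \<Longrightarrow> code ! i = Dec r jz jnz \<Longrightarrow> R r = Suc k \<Longrightarrow>
   step p (b + i, R) = (jnz, R(r := k))"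
  unfolding at_def step_def by auto

definition clear :: "nat \<Rightarrow> nat \<Rightarrow> instr list" where
  "clear r b = [Dec r (Suc b) b]"

lemma clear_run: assumes "at p b (clear r b)" shows "runs p (b, R) (Suc b, R(r := 0))"
proof (induction "R r" arbitrary: R)
  case 0
  have "step p (b + 0, R) = (Suc b, R)" by (rule step_Dec0[OF assms]) (use 0 in \<open>auto simp: clear_def\<close>)
  then show ?case using 0 by (metis add_0_right fun_upd_triv runs_refl runs_step)
next
  case (Suc k)
  have "step p (b + 0, R) = (b, R(r := k))" by (rule step_Dec1[OF assms]) (use Suc(2) in \<open>auto simp: clear_def\<close>)
  moreover have "runs p (b, R(r := k)) (Suc b, (R(r := k))(r := 0))" by (rule Suc(1)) simp
  ultimately show ?case by (auto intro: runs_step)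
qed

definition copy :: "nat \<Rightarrow> nat \<Rightarrow> nat \<Rightarrow> nat \<Rightarrow> instr list" where
  "copy src dst tmp b = [Dec dst (b+1) b, Dec tmp (b+2) (b+1), Dec src (b+5) (b+3), Inc dst (b+4),
     Inc tmp (b+2), Dec tmp (b+7) (b+6), Inc src (b+5)]"

lemma length_copy[simp]: "length (copy src dst tmp b) = 7" by (simp add: copy_def)

lemma copy_loop1:
  assumes a: "at p b (copy src dst tmp b)" and d: "src \<noteq> dst" "src \<noteq> tmp" "dst \<noteq> tmp"
  shows "R src = k \<Longrightarrow> runs p (b+2, R) (b+5, R(src := 0, dst := R dst + k, tmp := R tmp + k))"
proof (induction k arbitrary: R)
  case 0
  have "step p (b + 2, R) = (b + 5, R)" by (rule step_Dec0[OF a]) (use 0 in \<open>auto simp: copy_def\<close>)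
  then show ?case using 0 by (metis add_0_right fun_upd_triv runs_refl runs_step)
next
  case (Suc k)
  let ?R1 = "R(src := k)" let ?R2 = "?R1(dst := Suc (?R1 dst))" let ?R3 = "?R2(tmp := Suc (?R2 tmp))"
  have 1: "step p (b + 2, R) = (b + 3, ?R1)" by (rule step_Dec1[OF a]) (use Suc(2) in \<open>auto simp: copy_def\<close>)
  have 2: "step p (b + 3, ?R1) = (b + 4, ?R2)" by (rule step_Inc[OF a]) (auto simp: copy_def)
  have 3: "step p (b + 4, ?R2) = (b + 2, ?R3)" by (rule step_Inc[OF a]) (auto simp: copy_def)
  have 4: "runs p (b+2, ?R3) (b+5, ?R3(src := 0, dst := ?R3 dst + k, tmp := ?R3 tmp + k))"
    by (rule Suc(1)) (use d in simp)
  have e: "?R3(src := 0, dst := ?R3 dst + k, tmp := ?R3 tmp + k) = R(src := 0, dst := R dst + Suc k, tmp := R tmp + Suc k)"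
    using d by (auto simp: fun_eq_iff)
  show ?case using 1 2 3 4 e by (metis runs_step)
qed

lemma copy_loop2:
  assumes a: "at p b (copy src dst tmp b)" and d: "src \<noteq> dst" "src \<noteq> tmp" "dst \<noteq> tmp"
  shows "R tmp = k \<Longrightarrow> runs p (b+5, R) (b+7, R(tmp := 0, src := R src + k))"
proof (induction k arbitrary: R)
  case 0
  have "step p (b + 5, R) = (b + 7, R)" by (rule step_Dec0[OF a]) (use 0 in \<open>auto simp: copy_def\<close>)
  then show ?case using 0 by (metis add_0_right fun_upd_triv runs_refl runs_step)
next
  case (Suc k)
  let ?R1 = "R(tmp := k)" let ?R2 = "?R1(src := Suc (?R1 src))"
  have 1: "step p (b + 5, R) = (b + 6, ?R1)" by (rule step_Dec1[OF a]) (use Suc(2) in \<open>auto simp: copy_def\<close>)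
  have 2: "step p (b + 6, ?R1) = (b + 5, ?R2)" by (rule step_Inc[OF a]) (auto simp: copy_def)
  have 4: "runs p (b+5, ?R2) (b+7, ?R2(tmp := 0, src := ?R2 src + k))"
    by (rule Suc(1)) (use d in simp)
  have e: "?R2(tmp := 0, src := ?R2 src + k) = R(tmp := 0, src := R src + Suc k)"
    using d by (auto simp: fun_eq_iff)
  show ?case using 1 2 4 e by (metis runs_step)
qed

lemma copy_run:
  assumes a: "at p b (copy src dst tmp b)" and d: "src \<noteq> dst" "src \<noteq> tmp" "dst \<noteq> tmp"
  shows "runs p (b, R) (b + 7, R(dst := R src, tmp := 0))"
proof -
  let ?R1 = "R(dst := 0)" let ?R2 = "?R1(tmp := 0)"
  have c1: "at p b (clear dst b)" using a unfolding at_def copy_def clear_def by auto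
  have c2: "at p (Suc b) (clear tmp (Suc b))" using a unfolding at_def copy_def clear_def by auto
  have 1: "runs p (b, R) (Suc b, ?R1)" by (rule clear_run[OF c1])
  have 2: "runs p (Suc b, ?R1) (b + 2, ?R2)" using clear_run[OF c2, of ?R1] by simp
  let ?R3 = "?R2(src := 0, dst := ?R2 dst + R src, tmp := ?R2 tmp + R src)"
  have 3: "runs p (b + 2, ?R2) (b + 5, ?R3)" by (rule copy_loop1[OF a d]) (use d in simp)
  have 4: "runs p (b + 5, ?R3) (b + 7, ?R3(tmp := 0, src := ?R3 src + R src))"
    by (rule copy_loop2[OF a d]) (use d in simp)
  have e: "?R3(tmp := 0, src := ?R3 src + R src) = R(dst := R src, tmp := 0)"
    using d by (auto simp: fun_eq_iff)
  have "runs p (b, R) (b + 7, ?R3(tmp := 0, src := ?R3 src + R src))"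
    by (rule runs_trans[OF runs_trans[OF runs_trans[OF 1 2] 3] 4])
  then show ?thesis by (simp only: e)
qed


fun compile :: "recf \<Rightarrow> nat list \<Rightarrow> nat \<Rightarrow> nat \<Rightarrow> nat \<Rightarrow> instr list"
and compile_list :: "recf list \<Rightarrow> nat list \<Rightarrow> nat \<Rightarrow> nat \<Rightarrow> nat \<Rightarrow> instr list" where
  "compile Z args out fr b = clear out b"
| "compile S args out fr b = copy (hd args) out fr b @ [Inc out (b + 8)]"
| "compile (Id i) args out fr b = copy (args ! i) out fr b"
| "compile (Cn f gs) args out fr b =
     (let c1 = compile_list gs args fr (fr + length gs) b
      in c1 @ compile f [fr..<fr + length gs] out (fr + length gs) (b + length c1))"
| "compile (Pr f g) args out fr b =
     (let c1 = compile f (tl args) (fr + 1) (fr + 4) b;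
          b1 = b + length c1;
          L = b1 + 8;
          c4 = compile g (fr # Suc fr # tl args) (fr + 3) (fr + 4) (Suc L);
          b4 = Suc L + length c4;
          ex = b4 + 8
      in c1 @ clear fr b1 @ copy (hd args) (fr + 2) (fr + 4) (Suc b1) @ [Dec (fr + 2) ex (Suc L)]
         @ c4 @ copy (fr + 3) (fr + 1) (fr + 4) b4 @ [Inc fr L] @ copy (fr + 1) out (fr + 4) ex)"
| "compile (Mn f) args out fr b =
     (let c1 = compile f (fr # args) (fr + 1) (fr + 2) (Suc b);
          b2 = Suc b + length c1
      in clear fr b @ c1 @ [Dec (fr + 1) (b2 + 2) (Suc b2), Inc fr (Suc b)] @ copy fr out (fr + 2) (b2 + 2))"
| "compile_list [] args t fr b = []"
| "compile_list (g # gs) args t fr b =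
     (let c = compile g args t fr b in c @ compile_list gs args (Suc t) fr (b + length c))"

definition CC :: "recf \<Rightarrow> nat list \<Rightarrow> nat \<Rightarrow> bool" where
  "CC f xs y \<longleftrightarrow> (\<forall>args out fr b p R. xs = map R args \<longrightarrow> (\<forall>a\<in>set args. a < fr) \<longrightarrow> out < fr
     \<longrightarrow> out \<notin> set args \<longrightarrow> at p b (compile f args out fr b) \<longrightarrow>
     (\<exists>R'. runs p (b, R) (b + length (compile f args out fr b), R') \<and> R' out = y
        \<and> (\<forall>r<fr. r \<noteq> out \<longrightarrow> R' r = R r)))"

lemma CCD: "CC f xs y \<Longrightarrow> xs = map R args \<Longrightarrow> (\<forall>a\<in>set args. a < fr) \<Longrightarrow> out < fr
     \<Longrightarrow> out \<notin> set args \<Longrightarrow> at p b (compile f args out fr b) \<Longrightarrow>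
     (\<exists>R'. runs p (b, R) (b + length (compile f args out fr b), R') \<and> R' out = y
        \<and> (\<forall>r<fr. r \<noteq> out \<longrightarrow> R' r = R r))"
  unfolding CC_def by blast

lemma compile_list_correct:
  "length ys = length gs \<Longrightarrow> (\<forall>i<length gs. CC (gs ! i) xs (ys ! i)) \<Longrightarrow> xs = map R args
   \<Longrightarrow> (\<forall>a\<in>set args. a < t) \<Longrightarrow> t + length gs \<le> fr \<Longrightarrow> at p b (compile_list gs args t fr b) \<Longrightarrow>
   \<exists>R'. runs p (b, R) (b + length (compile_list gs args t fr b), R') \<and> (\<forall>i<length gs. R' (t + i) = ys ! i)
     \<and> (\<forall>r<fr. (r < t \<or> t + length gs \<le> r) \<longrightarrow> R' r = R r)"
proof (induction gs arbitrary: ys t b R)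
  case Nil then show ?case by (auto intro: runs_refl)
next
  case (Cons g gs)
  obtain y ys' where ys: "ys = y # ys'" using Cons.prems(1) by (cases ys) auto
  let ?c = "compile g args t fr b"
  have atc: "at p b ?c" and atr: "at p (b + length ?c) (compile_list gs args (Suc t) fr (b + length ?c))"
    using Cons.prems(6) by (simp_all add: Let_def at_append)
  have ccg: "CC g xs y" using Cons.prems(2) ys by force
  obtain R1 where R1: "runs p (b, R) (b + length ?c, R1)" "R1 t = y" "\<forall>r<fr. r \<noteq> t \<longrightarrow> R1 r = R r"
    using CCD[OF ccg Cons.prems(3) _ _ _ atc] Cons.prems(4,5) by fastforce
  have xs1: "xs = map R1 args" using Cons.prems(3,4,5) R1(3) by auto
  have cc2: "\<forall>i<length gs. CC (gs ! i) xs (ys' ! i)" using Cons.prems(2) ys by auto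
  obtain R2 where R2: "runs p (b + length ?c, R1) (b + length ?c + length (compile_list gs args (Suc t) fr (b + length ?c)), R2)"
    "\<forall>i<length gs. R2 (Suc t + i) = ys' ! i" "\<forall>r<fr. (r < Suc t \<or> Suc t + length gs \<le> r) \<longrightarrow> R2 r = R1 r"
    using Cons.IH[OF _ cc2 xs1 _ _ atr] Cons.prems(1,4,5) ys by fastforce
  show ?case
  proof (intro exI conjI)
    show "runs p (b, R) (b + length (compile_list (g # gs) args t fr b), R2)"
      using runs_trans[OF R1(1) R2(1)] by (simp add: Let_def add.assoc)
    show "\<forall>i<length (g # gs). R2 (t + i) = ys ! i"
    proof (intro allI impI)
      fix i assume "i < length (g # gs)"
      then show "R2 (t + i) = ys ! i" using R1 R2 ys Cons.prems(5) by (cases i) auto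
    qed
    show "\<forall>r<fr. (r < t \<or> t + length (g # gs) \<le> r) \<longrightarrow> R2 r = R r"
      using R1 R2 by auto
  qed
qed

lemma Pr_down: "eval (Pr f g) (n # xs) y \<Longrightarrow> i \<le> n \<Longrightarrow> \<exists>y'. eval (Pr f g) (i # xs) y'"
proof (induction n arbitrary: y)
  case 0 then show ?case by auto
next
  case (Suc n)
  show ?case
  proof (cases "i = Suc n")
    case True then show ?thesis using Suc by auto
  next
    case False
    from Suc.prems(1) obtain y' where "eval (Pr f g) (n # xs) y'" by (cases rule: PrE) auto
    then show ?thesis using Suc False by auto
  qed
qed

lemma Pr_inv0: "eval (Pr f g) (0 # xs) y \<Longrightarrow> eval f xs y"
  by (cases rule: PrE) auto

lemma Pr_invS: "eval (Pr f g) (Suc i # xs) z \<Longrightarrow> \<exists>y'. eval (Pr f g) (i # xs) y' \<and> eval g (i # y' # xs) z"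
  by (cases rule: PrE) auto


lemma CC_Z: "CC Z xs 0"
  unfolding CC_def
proof (intro allI impI)
  fix args out fr b p R
  assume "at p b (compile Z args out fr b)"
  then have "runs p (b, R) (Suc b, R(out := 0))" by (intro clear_run) simp
  then show "\<exists>R'. runs p (b, R) (b + length (compile Z args out fr b), R') \<and> R' out = 0 \<and> (\<forall>r<fr. r \<noteq> out \<longrightarrow> R' r = R r)"
    by (intro exI[of _ "R(out := 0)"]) (simp add: clear_def)
qed

lemma CC_S: "CC S [x] (Suc x)"
  unfolding CC_def
proof (intro allI impI)
  fix args out fr b p R
  assume xs: "[x] = map R args" and lt: "\<forall>a\<in>set args. a < fr" and o: "out < fr" and na: "out \<notin> set args"
    and at: "at p b (compile S args out fr b)"
  obtain a where args: "args = [a]" and x: "x = R a" using xs by (cases args) auto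
  have a_lt: "a < fr" and a_out: "a \<noteq> out" using lt na args by auto
  let ?code = "compile S args out fr b"
  have atc: "at p b (copy a out fr b)" using at args by (simp add: at_append)
  have 1: "runs p (b, R) (b + 7, R(out := R a, fr := 0))"
    by (rule copy_run[OF atc]) (use a_lt a_out o in auto)
  have 2: "step p (b + 7, R(out := R a, fr := 0)) = (b + 8, (R(out := R a, fr := 0))(out := Suc ((R(out := R a, fr := 0)) out)))"
    by (rule step_Inc[OF at]) (simp_all add: args copy_def)
  show "\<exists>R'. runs p (b, R) (b + length ?code, R') \<and> R' out = Suc x \<and> (\<forall>r<fr. r \<noteq> out \<longrightarrow> R' r = R r)"
  proof (intro exI conjI)
    show "runs p (b, R) (b + length ?code, (R(out := R a, fr := 0))(out := Suc ((R(out := R a, fr := 0)) out)))"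
      using runs_trans[OF 1 runs_step[OF 2 runs_refl]] by (simp add: args)
  qed (use o x in auto)
qed

lemma CC_Id: "i < length xs \<Longrightarrow> CC (Id i) xs (xs ! i)"
  unfolding CC_def
proof (intro allI impI)
  fix args out fr b p R
  assume i: "i < length xs" and xs: "xs = map R args" and lt: "\<forall>a\<in>set args. a < fr" and o: "out < fr" and na: "out \<notin> set args"
    and at: "at p b (compile (Id i) args out fr b)"
  let ?a = "args ! i"
  have ia: "i < length args" using i xs by simp
  have a_lt: "?a < fr" and a_out: "?a \<noteq> out" using lt na ia by (auto simp: nth_mem)
  have 1: "runs p (b, R) (b + 7, R(out := R ?a, fr := 0))"
    by (rule copy_run) (use at a_lt a_out o in auto)
  show "\<exists>R'. runs p (b, R) (b + length (compile (Id i) args out fr b), R') \<and> R' out = xs ! i \<and> (\<forall>r<fr. r \<noteq> out \<longrightarrow> R' r = R r)"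
    by (intro exI[of _ "R(out := R ?a, fr := 0)"]) (use 1 o xs ia in auto)
qed

lemma CC_Cn: assumes l: "length ys = length gs" and g: "\<forall>i<length gs. CC (gs ! i) xs (ys ! i)"
  and f: "CC f ys z" shows "CC (Cn f gs) xs z"
  unfolding CC_def
proof (intro allI impI)
  fix args out fr b p R
  assume xs: "xs = map R args" and lt: "\<forall>a\<in>set args. a < fr" and o: "out < fr" and na: "out \<notin> set args"
    and at: "at p b (compile (Cn f gs) args out fr b)"
  let ?k = "length gs"
  let ?c1 = "compile_list gs args fr (fr + ?k) b"
  let ?c2 = "compile f [fr..<fr + ?k] out (fr + ?k) (b + length ?c1)"
  have at1: "at p b ?c1" and at2: "at p (b + length ?c1) ?c2" using at by (simp_all add: Let_def at_append)
  obtain R1 where R1: "runs p (b, R) (b + length ?c1, R1)" "\<forall>i<?k. R1 (fr + i) = ys ! i"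
     "\<forall>r<fr + ?k. (r < fr \<or> fr + ?k \<le> r) \<longrightarrow> R1 r = R r"
    using compile_list_correct[OF l g xs lt _ at1] by auto
  have ys: "ys = map R1 [fr..<fr + ?k]"
    by (rule nth_equalityI) (use l R1(2) in auto)
  obtain R2 where R2: "runs p (b + length ?c1, R1) (b + length ?c1 + length ?c2, R2)" "R2 out = z"
     "\<forall>r<fr + ?k. r \<noteq> out \<longrightarrow> R2 r = R1 r"
    using CCD[OF f ys _ _ _ at2] lt o by fastforce
  show "\<exists>R'. runs p (b, R) (b + length (compile (Cn f gs) args out fr b), R') \<and> R' out = z \<and> (\<forall>r<fr. r \<noteq> out \<longrightarrow> R' r = R r)"
  proof (intro exI conjI)
    show "runs p (b, R) (b + length (compile (Cn f gs) args out fr b), R2)"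
      using runs_trans[OF R1(1) R2(1)] by (simp add: Let_def add.assoc)
  qed (use R1 R2 in auto)
qed


lemma step_Inc1: "at p b [Inc r j] \<Longrightarrow> step p (b, R) = (j, R(r := Suc (R r)))"
  using step_Inc[of p b "[Inc r j]" 0] by simp
lemma step_Dec0': "at p b [Dec r jz jnz] \<Longrightarrow> R r = 0 \<Longrightarrow> step p (b, R) = (jz, R)"
  using step_Dec0[of p b "[Dec r jz jnz]" 0] by simp
lemma step_Dec1': "at p b [Dec r jz jnz] \<Longrightarrow> R r = Suc k \<Longrightarrow> step p (b, R) = (jnz, R(r := k))"
  using step_Dec1[of p b "[Dec r jz jnz]" 0] by simp

lemma at_appendD1: "at p b (c1 @ c2) \<Longrightarrow> at p b c1" by (simp add: at_append)
lemma at_appendD2: "at p b (c1 @ c2) \<Longrightarrow> b' = b + length c1 \<Longrightarrow> at p b' c2" by (simp add: at_append)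

lemma CC_Pr:
  assumes IHf: "\<forall>xs y. eval f xs y \<longrightarrow> CC f xs y" and IHg: "\<forall>xs y. eval g xs y \<longrightarrow> CC g xs y"
    and ev: "eval (Pr f g) xs y"
  shows "CC (Pr f g) xs y"
  unfolding CC_def
proof (intro allI impI)
  fix args out fr b p R0
  assume xs: "xs = map R0 args" and lt: "\<forall>a\<in>set args. a < fr" and o: "out < fr" and na: "out \<notin> set args"
    and at: "at p b (compile (Pr f g) args out fr b)"
  have "xs \<noteq> []" using ev by (cases rule: PrE) auto
  then obtain a0 as where args: "args = a0 # as" using xs by (cases args) auto
  define n where "n = R0 a0"
  define asv where "asv = map R0 as"
  have xs2: "xs = n # asv" using xs args n_def asv_def by simp
  have a0_lt: "a0 < fr" and as_lt: "\<forall>a\<in>set as. a < fr" and o_a0: "out \<noteq> a0" using lt na args by auto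
  define c1 where "c1 = compile f as (fr + 1) (fr + 4) b"
  define b1 where "b1 = b + length c1"
  define L where "L = b1 + 8"
  define c4 where "c4 = compile g (fr # Suc fr # as) (fr + 3) (fr + 4) (Suc L)"
  define b4 where "b4 = Suc L + length c4"
  define ex where "ex = b4 + 8"
  have code: "compile (Pr f g) args out fr b = c1 @ clear fr b1 @ copy a0 (fr + 2) (fr + 4) (Suc b1) @ [Dec (fr + 2) ex (Suc L)]
         @ c4 @ copy (fr + 3) (fr + 1) (fr + 4) b4 @ [Inc fr L] @ copy (fr + 1) out (fr + 4) ex"
    by (simp add: args c1_def b1_def L_def c4_def b4_def ex_def Let_def ac_simps)
  have lencode: "b + length (compile (Pr f g) args out fr b) = ex + 7"
    unfolding code by (simp add: clear_def ex_def b4_def L_def b1_def)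
  note at = at[unfolded code]
  have at_c1: "at p b c1" by (rule at_appendD1[OF at])
  have r1: "at p b1 (clear fr b1 @ copy a0 (fr + 2) (fr + 4) (Suc b1) @ [Dec (fr + 2) ex (Suc L)]
         @ c4 @ copy (fr + 3) (fr + 1) (fr + 4) b4 @ [Inc fr L] @ copy (fr + 1) out (fr + 4) ex)"
    by (rule at_appendD2[OF at]) (simp add: b1_def)
  have at_cl: "at p b1 (clear fr b1)" by (rule at_appendD1[OF r1])
  have r2: "at p (Suc b1) (copy a0 (fr + 2) (fr + 4) (Suc b1) @ [Dec (fr + 2) ex (Suc L)]
         @ c4 @ copy (fr + 3) (fr + 1) (fr + 4) b4 @ [Inc fr L] @ copy (fr + 1) out (fr + 4) ex)"
    by (rule at_appendD2[OF r1]) (simp add: clear_def)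
  have at_cp1: "at p (Suc b1) (copy a0 (fr + 2) (fr + 4) (Suc b1))" by (rule at_appendD1[OF r2])
  have r3: "at p L ([Dec (fr + 2) ex (Suc L)]
         @ c4 @ copy (fr + 3) (fr + 1) (fr + 4) b4 @ [Inc fr L] @ copy (fr + 1) out (fr + 4) ex)"
    by (rule at_appendD2[OF r2]) (simp add: L_def)
  have at_dec: "at p L [Dec (fr + 2) ex (Suc L)]" by (rule at_appendD1[OF r3])
  have r4: "at p (Suc L) (c4 @ copy (fr + 3) (fr + 1) (fr + 4) b4 @ [Inc fr L] @ copy (fr + 1) out (fr + 4) ex)"
    by (rule at_appendD2[OF r3]) simp
  have at_c4: "at p (Suc L) c4" by (rule at_appendD1[OF r4])
  have r5: "at p b4 (copy (fr + 3) (fr + 1) (fr + 4) b4 @ [Inc fr L] @ copy (fr + 1) out (fr + 4) ex)"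
    by (rule at_appendD2[OF r4]) (simp add: b4_def)
  have at_cp2: "at p b4 (copy (fr + 3) (fr + 1) (fr + 4) b4)" by (rule at_appendD1[OF r5])
  have r6: "at p (b4 + 7) ([Inc fr L] @ copy (fr + 1) out (fr + 4) ex)"
    by (rule at_appendD2[OF r5]) simp
  have at_inc: "at p (b4 + 7) [Inc fr L]" by (rule at_appendD1[OF r6])
  have at_cp3: "at p ex (copy (fr + 1) out (fr + 4) ex)"
    by (rule at_appendD2[OF r6]) (simp add: ex_def)
  have loop: "\<forall>i R. d = n - i \<longrightarrow> i \<le> n \<longrightarrow> R fr = i \<longrightarrow> R (fr + 2) = n - i \<longrightarrow>
      eval (Pr f g) (i # asv) (R (fr + 1)) \<longrightarrow> (\<forall>r<fr. R r = R0 r) \<longrightarrow>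
      (\<exists>R'. runs p (L, R) (ex, R') \<and> R' (fr + 1) = y \<and> (\<forall>r<fr. R' r = R0 r))" for d
  proof (induction d)
    case 0
    show ?case
    proof (intro allI impI)
      fix i R assume H: "0 = n - i" "i \<le> n" "R fr = i" "R (fr + 2) = n - i"
        "eval (Pr f g) (i # asv) (R (fr + 1))" "\<forall>r<fr. R r = R0 r"
      have i: "i = n" using H by simp
      have "step p (L, R) = (ex, R)" by (rule step_Dec0'[OF at_dec]) (use H in simp_all)
      then have "runs p (L, R) (ex, R)" using runs_step runs_refl by simp
      moreover have "R (fr + 1) = y" using eval_det[OF H(5)[unfolded i] ev[unfolded xs2]] .
      ultimately show "\<exists>R'. runs p (L, R) (ex, R') \<and> R' (fr + 1) = y \<and> (\<forall>r<fr. R' r = R0 r)"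
        using H(6) by blast
    qed
  next
    case (Suc d)
    show ?case
    proof (intro allI impI)
      fix i R assume H: "Suc d = n - i" "i \<le> n" "R fr = i" "R (fr + 2) = n - i"
        "eval (Pr f g) (i # asv) (R (fr + 1))" "\<forall>r<fr. R r = R0 r"
      have iln: "Suc i \<le> n" using H by simp
      obtain z where z: "eval (Pr f g) (Suc i # asv) z" using Pr_down[OF ev[unfolded xs2] iln] by blast
      obtain y' where y': "eval (Pr f g) (i # asv) y'" "eval g (i # y' # asv) z" using Pr_invS[OF z] by blast
      have yy: "y' = R (fr + 1)" using eval_det[OF y'(1) H(5)] .
      let ?R1 = "R(fr + 2 := d)"
      have s1: "step p (L, R) = (Suc L, ?R1)" by (rule step_Dec1'[OF at_dec]) (use H in simp_all)
      have ccg: "CC g (i # R (fr + 1) # asv) z" using IHg y'(2) yy by simp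
      have m1: "i # R (fr + 1) # asv = map ?R1 (fr # Suc fr # as)"
      proof -
        have "map ?R1 as = asv" unfolding asv_def using H(6) as_lt by (auto intro!: map_cong)
        then show ?thesis using H(3) by simp
      qed
      obtain R2 where R2: "runs p (Suc L, ?R1) (Suc L + length c4, R2)" "R2 (fr + 3) = z"
        "\<forall>r<fr + 4. r \<noteq> fr + 3 \<longrightarrow> R2 r = ?R1 r"
        using CCD[OF ccg m1 _ _ _ at_c4[unfolded c4_def]] as_lt unfolding c4_def by fastforce
      let ?R3 = "R2(fr + 1 := R2 (fr + 3), fr + 4 := 0)"
      have s3: "runs p (b4, R2) (b4 + 7, ?R3)" by (rule copy_run[OF at_cp2]) simp_all
      let ?R4 = "?R3(fr := Suc (?R3 fr))"
      have s4: "step p (b4 + 7, ?R3) = (L, ?R4)" by (rule step_Inc1[OF at_inc])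
      have R4: "?R4 fr = Suc i" "?R4 (fr + 2) = n - Suc i" "?R4 (fr + 1) = z" "\<forall>r<fr. ?R4 r = R0 r"
        using R2(2,3) H by auto
      have "d = n - Suc i" using H by simp
      then obtain R' where R': "runs p (L, ?R4) (ex, R')" "R' (fr + 1) = y" "\<forall>r<fr. R' r = R0 r"
        using Suc.IH iln R4 z by (metis (no_types, lifting))
      have "runs p (L, R) (ex, R')"
        using runs_step[OF s1 runs_trans[OF R2(1)[folded b4_def] runs_trans[OF s3 runs_step[OF s4 R'(1)]]]] .
      then show "\<exists>R'. runs p (L, R) (ex, R') \<and> R' (fr + 1) = y \<and> (\<forall>r<fr. R' r = R0 r)"
        using R' by blast
    qed
  qed
  obtain y0 where y0: "eval (Pr f g) (0 # asv) y0" using Pr_down[OF ev[unfolded xs2]] by blast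
  have ccf: "CC f asv y0" using IHf Pr_inv0[OF y0] by blast
  obtain R1 where R1: "runs p (b, R0) (b + length c1, R1)" "R1 (fr + 1) = y0"
     "\<forall>r<fr + 4. r \<noteq> fr + 1 \<longrightarrow> R1 r = R0 r"
    using CCD[OF ccf asv_def _ _ _ at_c1[unfolded c1_def]] as_lt unfolding c1_def by fastforce
  have s2: "runs p (b1, R1) (Suc b1, R1(fr := 0))" by (rule clear_run[OF at_cl])
  let ?R3 = "(R1(fr := 0))(fr + 2 := (R1(fr := 0)) a0, fr + 4 := 0)"
  have s3: "runs p (Suc b1, R1(fr := 0)) (Suc b1 + 7, ?R3)" by (rule copy_run[OF at_cp1]) (use a0_lt in simp_all)
  have eqL: "Suc b1 + 7 = L" by (simp add: L_def)
  have I: "?R3 fr = 0" "?R3 (fr + 2) = n - 0" "?R3 (fr + 1) = y0" "\<forall>r<fr. ?R3 r = R0 r"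
    using R1 a0_lt by (auto simp: n_def)
  obtain R' where R': "runs p (L, ?R3) (ex, R')" "R' (fr + 1) = y" "\<forall>r<fr. R' r = R0 r"
    using loop[of "n - 0"] I y0 by (metis (no_types, lifting) le0)
  let ?R'' = "R'(out := R' (fr + 1), fr + 4 := 0)"
  have s5: "runs p (ex, R') (ex + 7, ?R'')" by (rule copy_run[OF at_cp3]) (use o in simp_all)
  have "runs p (b, R0) (ex + 7, ?R'')"
    using runs_trans[OF R1(1)[folded b1_def] runs_trans[OF s2 runs_trans[OF s3[unfolded eqL] runs_trans[OF R'(1) s5]]]]
    by (simp add: L_def)
  then show "\<exists>R'. runs p (b, R0) (b + length (compile (Pr f g) args out fr b), R') \<and> R' out = y \<and> (\<forall>r<fr. r \<noteq> out \<longrightarrow> R' r = R0 r)"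
    unfolding lencode using R' o by auto
qed


lemma CC_Mn:
  assumes IHf: "\<forall>xs y. eval f xs y \<longrightarrow> CC f xs y" and ev: "eval (Mn f) xs n"
  shows "CC (Mn f) xs n"
  unfolding CC_def
proof (intro allI impI)
  fix args out fr b p R0
  assume xs: "xs = map R0 args" and lt: "\<forall>a\<in>set args. a < fr" and o: "out < fr" and na: "out \<notin> set args"
    and at: "at p b (compile (Mn f) args out fr b)"
  from ev have ev0: "eval f (n # xs) 0" and evm: "\<forall>m<n. \<exists>y. eval f (m # xs) y \<and> y \<noteq> 0"
    by (cases rule: MnE, auto)+
  define c1 where "c1 = compile f (fr # args) (fr + 1) (fr + 2) (Suc b)"
  define b2 where "b2 = Suc b + length c1"
  have code: "compile (Mn f) args out fr b = clear fr b @ c1 @ [Dec (fr + 1) (b2 + 2) (Suc b2)] @ [Inc fr (Suc b)] @ copy fr out (fr + 2) (b2 + 2)"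
    by (simp add: c1_def b2_def Let_def)
  have lencode: "b + length (compile (Mn f) args out fr b) = b2 + 9"
    unfolding code by (simp add: clear_def b2_def)
  note at = at[unfolded code]
  have at_cl: "at p b (clear fr b)" by (rule at_appendD1[OF at])
  have r1: "at p (Suc b) (c1 @ [Dec (fr + 1) (b2 + 2) (Suc b2)] @ [Inc fr (Suc b)] @ copy fr out (fr + 2) (b2 + 2))"
    by (rule at_appendD2[OF at]) (simp add: clear_def)
  have at_c1: "at p (Suc b) c1" by (rule at_appendD1[OF r1])
  have r2: "at p b2 ([Dec (fr + 1) (b2 + 2) (Suc b2)] @ [Inc fr (Suc b)] @ copy fr out (fr + 2) (b2 + 2))"
    by (rule at_appendD2[OF r1]) (simp add: b2_def)
  have at_dec: "at p b2 [Dec (fr + 1) (b2 + 2) (Suc b2)]" by (rule at_appendD1[OF r2])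
  have r3: "at p (Suc b2) ([Inc fr (Suc b)] @ copy fr out (fr + 2) (b2 + 2))"
    by (rule at_appendD2[OF r2]) simp
  have at_inc: "at p (Suc b2) [Inc fr (Suc b)]" by (rule at_appendD1[OF r3])
  have at_cp: "at p (b2 + 2) (copy fr out (fr + 2) (b2 + 2))" by (rule at_appendD2[OF r3]) simp
  have loop: "\<forall>i R. d = n - i \<longrightarrow> i \<le> n \<longrightarrow> R fr = i \<longrightarrow> (\<forall>r<fr. R r = R0 r) \<longrightarrow>
      (\<exists>R'. runs p (Suc b, R) (b2 + 2, R') \<and> R' fr = n \<and> (\<forall>r<fr. R' r = R0 r))" for d
  proof (induction d)
    case 0
    show ?case
    proof (intro allI impI)
      fix i R assume H: "0 = n - i" "i \<le> n" "R fr = i" "\<forall>r<fr. R r = R0 r"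
      have i: "i = n" using H by simp
      have m: "i # xs = map R (fr # args)" using H(3,4) lt xs by (auto intro!: map_cong)
      obtain R1 where R1: "runs p (Suc b, R) (Suc b + length c1, R1)" "R1 (fr + 1) = 0"
        "\<forall>r<fr + 2. r \<noteq> fr + 1 \<longrightarrow> R1 r = R r"
        using CCD[OF IHf[rule_format, OF ev0[folded i]] m _ _ _ at_c1[unfolded c1_def]] lt unfolding c1_def by fastforce
      have s: "step p (b2, R1) = (b2 + 2, R1)" by (rule step_Dec0'[OF at_dec]) (rule R1(2))
      have "runs p (Suc b, R) (b2 + 2, R1)" using runs_trans[OF R1(1)[folded b2_def] runs_step[OF s runs_refl]] .
      then show "\<exists>R'. runs p (Suc b, R) (b2 + 2, R') \<and> R' fr = n \<and> (\<forall>r<fr. R' r = R0 r)"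
        using R1(3) H i by auto
    qed
  next
    case (Suc d)
    show ?case
    proof (intro allI impI)
      fix i R assume H: "Suc d = n - i" "i \<le> n" "R fr = i" "\<forall>r<fr. R r = R0 r"
      have iln: "i < n" using H by simp
      obtain y where y: "eval f (i # xs) y" "y \<noteq> 0" using evm iln by blast
      then obtain k where k: "y = Suc k" by (cases y) auto
      have m: "i # xs = map R (fr # args)" using H(3,4) lt xs by (auto intro!: map_cong)
      obtain R1 where R1: "runs p (Suc b, R) (Suc b + length c1, R1)" "R1 (fr + 1) = Suc k"
        "\<forall>r<fr + 2. r \<noteq> fr + 1 \<longrightarrow> R1 r = R r"
        using CCD[OF IHf[rule_format, OF y(1)] m _ _ _ at_c1[unfolded c1_def]] lt k unfolding c1_def by fastforce
      have s1: "step p (b2, R1) = (Suc b2, R1(fr + 1 := k))" by (rule step_Dec1'[OF at_dec]) (rule R1(2))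
      let ?R2 = "(R1(fr + 1 := k))(fr := Suc ((R1(fr + 1 := k)) fr))"
      have s2: "step p (Suc b2, R1(fr + 1 := k)) = (Suc b, ?R2)" by (rule step_Inc1[OF at_inc])
      have I: "?R2 fr = Suc i" "\<forall>r<fr. ?R2 r = R0 r" using R1(3) H by auto
      have "d = n - Suc i" "Suc i \<le> n" using H by auto
      then obtain R' where R': "runs p (Suc b, ?R2) (b2 + 2, R')" "R' fr = n" "\<forall>r<fr. R' r = R0 r"
        using Suc.IH I by blast
      have "runs p (Suc b, R) (b2 + 2, R')"
        using runs_trans[OF R1(1)[folded b2_def] runs_step[OF s1 runs_step[OF s2 R'(1)]]] .
      then show "\<exists>R'. runs p (Suc b, R) (b2 + 2, R') \<and> R' fr = n \<and> (\<forall>r<fr. R' r = R0 r)"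
        using R' by blast
    qed
  qed
  have s0: "runs p (b, R0) (Suc b, R0(fr := 0))" by (rule clear_run[OF at_cl])
  have "\<exists>R'. runs p (Suc b, R0(fr := 0)) (b2 + 2, R') \<and> R' fr = n \<and> (\<forall>r<fr. R' r = R0 r)"
    by (rule loop[of "n - 0", rule_format, of 0]) auto
  then obtain R' where R': "runs p (Suc b, R0(fr := 0)) (b2 + 2, R')" "R' fr = n" "\<forall>r<fr. R' r = R0 r"
    by blast
  let ?R'' = "R'(out := R' fr, fr + 2 := 0)"
  have s5: "runs p (b2 + 2, R') (b2 + 2 + 7, ?R'')" by (rule copy_run[OF at_cp]) (use o in simp_all)
  have "runs p (b, R0) (b2 + 9, ?R'')" using runs_trans[OF s0 runs_trans[OF R'(1) s5]] by (simp add: add.commute)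
  then show "\<exists>R'. runs p (b, R0) (b + length (compile (Mn f) args out fr b), R') \<and> R' out = n \<and> (\<forall>r<fr. r \<noteq> out \<longrightarrow> R' r = R0 r)"
    unfolding lencode using R' o by auto
qed

lemma compile_correct: "\<forall>xs y. eval f xs y \<longrightarrow> CC f xs y"
proof (induction f)
  case Z then show ?case by (auto elim: ZE intro: CC_Z)
next
  case S then show ?case by (auto elim: SE intro: CC_S)
next
  case (Id i) then show ?case by (auto elim!: IdE intro: CC_Id)
next
  case (Cn f gs)
  show ?case
  proof (intro allI impI)
    fix xs y assume "eval (Cn f gs) xs y"
    then obtain ys where ys: "length ys = length gs" "\<forall>i<length gs. eval (gs ! i) xs (ys ! i)" "eval f ys y"
      by (cases rule: CnE) auto
    have "\<forall>i<length gs. CC (gs ! i) xs (ys ! i)" using Cn.IH(2) ys(2) by (auto simp: nth_mem)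
    then show "CC (Cn f gs) xs y" using CC_Cn[OF ys(1)] Cn.IH(1) ys(3) by blast
  qed
next
  case (Pr f g) then show ?case using CC_Pr by blast
next
  case (Mn f) then show ?case using CC_Mn by blast
qed




definition prog :: "recf \<Rightarrow> instr list" where
  "prog g = (let c = compile g [0] 1 2 0 in c @ [Dec 1 (length c) (Suc (length c))])"

definition R0 :: "nat \<Rightarrow> nat \<Rightarrow> nat" where "R0 m = (\<lambda>r. if r = 0 then m else 0)"

definition halts :: "instr list \<Rightarrow> nat \<Rightarrow> bool" where
  "halts p m \<longleftrightarrow> (\<exists>t. length p \<le> fst ((step p ^^ t) (0, R0 m)))"

lemma step_halted: "length p \<le> fst c \<Longrightarrow> step p c = c"
  unfolding step_def by (auto split: prod.splits)

lemma steps_halted: "length p \<le> fst c \<Longrightarrow> (step p ^^ k) c = c"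
  by (induction k) (auto simp: step_halted)

lemma steps_fix: "step p c = c \<Longrightarrow> (step p ^^ k) c = c"
  by (induction k) auto

lemma prog_halts: assumes ev: "eval g [m] y" shows "halts (prog g) m \<longleftrightarrow> y \<noteq> 0"
proof -
  define c where "c = compile g [0] 1 2 0"
  define p where "p = prog g"
  have p: "p = c @ [Dec 1 (length c) (Suc (length c))]" unfolding p_def prog_def c_def by (simp add: Let_def)
  have atp: "at p 0 p" unfolding at_def by simp
  have atc: "at p 0 c" using atp p by (metis at_appendD1)
  have atd: "at p (length c) [Dec 1 (length c) (Suc (length c))]" using atp p by (metis at_appendD2 add_0)
  have cc: "CC g [m] y" using compile_correct ev by blast
  obtain R' where R': "runs p (0, R0 m) (length c, R')" "R' 1 = y"
    using CCD[OF cc, where R="R0 m" and args="[0]" and fr=2 and out=1 and b=0 and p=p] atc unfolding c_def by (auto simp: R0_def)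
  then obtain t0 where t0: "(step p ^^ t0) (0, R0 m) = (length c, R')" unfolding runs_def by blast
  show ?thesis
  proof (cases y)
    case 0
    have hfix: "step p (length c, R') = (length c, R')" by (rule step_Dec0'[OF atd]) (use R' 0 in simp)
    have "\<not> halts p m"
    proof
      assume "halts p m"
      then obtain t1 where t1: "length p \<le> fst ((step p ^^ t1) (0, R0 m))" unfolding halts_def by blast
      have "(step p ^^ (t1 + t0)) (0, R0 m) = (step p ^^ t0) ((step p ^^ t1) (0, R0 m))"
        by (simp add: funpow_add add.commute)
      also have "\<dots> = (step p ^^ t1) (0, R0 m)" by (rule steps_halted[OF t1])
      finally have a: "(step p ^^ (t1 + t0)) (0, R0 m) = (step p ^^ t1) (0, R0 m)" .
      have "(step p ^^ (t1 + t0)) (0, R0 m) = (step p ^^ t1) ((step p ^^ t0) (0, R0 m))"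
        by (simp add: funpow_add)
      also have "\<dots> = (length c, R')" unfolding t0 by (rule steps_fix[OF hfix])
      finally have "(length c, R') = (step p ^^ t1) (0, R0 m)" using a by simp
      then show False using t1 p by (metis fst_conv length_append_singleton not_less_eq_eq order_refl)
    qed
    then show ?thesis using 0 p_def by simp
  next
    case (Suc k)
    have s: "step p (length c, R') = (Suc (length c), R'(1 := k))" by (rule step_Dec1'[OF atd]) (use R' Suc in simp)
    have "(step p ^^ Suc t0) (0, R0 m) = (Suc (length c), R'(1 := k))"
      using t0 s by simp
    then have "halts p m" unfolding halts_def using p by (intro exI[of _ "Suc t0"]) simp
    then show ?thesis using Suc p_def by simp
  qed
qed




fun ireg :: "instr \<Rightarrow> nat" where
  "ireg (Inc r j) = r" | "ireg (Dec r jz jnz) = r"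

definition Kp :: "instr list \<Rightarrow> nat" where "Kp p = Suc (sum_list (map ireg p))"

lemma ireg_lt_Kp: "i < length p \<Longrightarrow> ireg (p ! i) < Kp p"
  unfolding Kp_def using member_le_sum_list[of "ireg (p ! i)" "map ireg p"] by (simp add: less_Suc_eq_le)

datatype gk = GF | GZ nat | GP nat
datatype vn = VP | VT | VQ nat | VZ nat | VN nat | VH gk | VM gk nat bool

definition gks :: "nat \<Rightarrow> gk list" where "gks K = GF # map GZ [0..<K] @ map GP [0..<K]"

definition verts :: "instr list \<Rightarrow> nat \<Rightarrow> vn list" where
  "verts p K = [VP, VT] @ map VQ [0..<Suc (length p)] @ map VZ [0..<length p] @ map VN [0..<length p]
     @ map VH (gks K) @ map (\<lambda>(g, j, s). VM g j s) (List.product (gks K) (List.product [0..<K] [True, False]))"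

fun allowed :: "gk \<Rightarrow> nat \<Rightarrow> bool \<Rightarrow> bool" where
  "allowed GF j s = True"
| "allowed (GZ r) j s = (j \<noteq> r)"
| "allowed (GP r) j s = (j \<noteq> r \<or> \<not> s)"

definition qv :: "instr list \<Rightarrow> nat \<Rightarrow> vn" where "qv p j = VQ (min j (length p))"

definition succs :: "instr list \<Rightarrow> nat \<Rightarrow> vn \<Rightarrow> vn list" where
  "succs p K v = (case v of
      VP \<Rightarrow> [VP, VQ 0]
    | VT \<Rightarrow> [VT]
    | VQ i \<Rightarrow> (if i < length p then (case p ! i of Inc r j \<Rightarrow> [qv p j] | Dec r jz jnz \<Rightarrow> [VZ i, VN i]) else [VH GF])
    | VZ i \<Rightarrow> (case p ! i of Inc r j \<Rightarrow> [VT] | Dec r jz jnz \<Rightarrow> [qv p jz, VH (GZ r)])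
    | VN i \<Rightarrow> (case p ! i of Inc r j \<Rightarrow> [VT] | Dec r jz jnz \<Rightarrow> [qv p jnz, VH (GP r)])
    | VH g \<Rightarrow> VT # map (\<lambda>(j, s). VM g j s) (filter (\<lambda>(j, s). allowed g j s) (List.product [0..<K] [True, False]))
    | VM g j s \<Rightarrow> [VH g])"

definition unitv :: "nat \<Rightarrow> nat \<Rightarrow> int list" where "unitv K d = map (\<lambda>i. if i = d then 1 else 0) [0..<Suc K]"
definition zerov :: "nat \<Rightarrow> int list" where "zerov K = replicate (Suc K) 0"
definition pumpv :: "nat \<Rightarrow> int list" where "pumpv K = map (\<lambda>i. if i \<le> 1 then 1 else 0) [0..<Suc K]"

definition wv :: "instr list \<Rightarrow> nat \<Rightarrow> vn \<Rightarrow> vn \<Rightarrow> int list" where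
  "wv p K u v = (case u of
      VP \<Rightarrow> (if v = VP then pumpv K else zerov K)
    | VQ i \<Rightarrow> (if i < length p then (case p ! i of Inc r j \<Rightarrow> unitv K (Suc r)
                  | Dec r jz jnz \<Rightarrow> (if v = VN i then map uminus (unitv K (Suc r)) else zerov K)) else zerov K)
    | VH g \<Rightarrow> (case v of VM g' j s \<Rightarrow> (if s then unitv K (Suc j) else map uminus (unitv K (Suc j))) | _ \<Rightarrow> zerov K)
    | _ \<Rightarrow> zerov K)"

definition eveN :: "vn \<Rightarrow> bool" where
  "eveN v = (case v of VZ i \<Rightarrow> False | VN i \<Rightarrow> False | _ \<Rightarrow> True)"

definition idx :: "instr list \<Rightarrow> nat \<Rightarrow> vn \<Rightarrow> nat" where
  "idx p K x = (THE i. i < length (verts p K) \<and> verts p K ! i = x)"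

definition inst :: "instr list \<Rightarrow> nat \<Rightarrow> nat \<Rightarrow> sp_instance" where
  "inst p K n = \<lparr> num_v = length (verts p K), owner = map eveN (verts p K),
     edges = concat (map (\<lambda>a. map (\<lambda>b. (idx p K a, idx p K b, wv p K a b)) (remdups (succs p K a))) (verts p K)),
     target = [idx p K VT], init = idx p K VP, thr = int n # replicate K 0 \<rparr>"

lemma distinct_verts: "distinct (verts p K)"
proof -
  have d: "distinct (gks K)" unfolding gks_def by (auto simp: distinct_map inj_on_def)
  have "distinct (List.product (gks K) (List.product [0..<K] [True, False]))"
    by (intro distinct_product d) auto
  then show ?thesis unfolding verts_def using d
    by (auto simp: distinct_map inj_on_def gks_def)
qed

lemma length_wv: "length (wv p K u v) = Suc K"
  unfolding wv_def unitv_def zerov_def pumpv_def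
  by (auto split: vn.splits instr.splits)

lemma succs_nonempty: "succs p K v \<noteq> []"
  unfolding succs_def by (auto split: vn.splits instr.splits)


definition okg :: "nat \<Rightarrow> gk \<Rightarrow> bool" where
  "okg K g = (case g of GF \<Rightarrow> True | GZ r \<Rightarrow> r < K | GP r \<Rightarrow> r < K)"

lemma in_gks: "g \<in> set (gks K) \<longleftrightarrow> okg K g"
  unfolding gks_def okg_def by (cases g) auto

definition okv :: "instr list \<Rightarrow> nat \<Rightarrow> vn \<Rightarrow> bool" where
  "okv p K x = (case x of VP \<Rightarrow> True | VT \<Rightarrow> True | VQ i \<Rightarrow> i \<le> length p | VZ i \<Rightarrow> i < length p
     | VN i \<Rightarrow> i < length p | VH g \<Rightarrow> okg K g | VM g j s \<Rightarrow> okg K g \<and> j < K)"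

lemma in_verts: "x \<in> set (verts p K) \<longleftrightarrow> okv p K x"
proof -
  have vm: "VM g j s \<in> (\<lambda>(g, j, s). VM g j s) ` (set (gks K) \<times> {0..<K} \<times> {True, False}) \<longleftrightarrow> g \<in> set (gks K) \<and> j < K"
    for g j s by force
  show ?thesis
    unfolding verts_def okv_def by (cases x) (auto simp: in_gks[symmetric] less_Suc_eq_le vm)
qed

definition regs_ok :: "instr list \<Rightarrow> nat \<Rightarrow> bool" where
  "regs_ok p K \<longleftrightarrow> (\<forall>i<length p. ireg (p ! i) < K)"

lemma succs_in: assumes ro: "regs_ok p K" and a: "okv p K a" and b: "b \<in> set (succs p K a)"
  shows "okv p K b"
proof (cases a)
  case (VQ i) then show ?thesis using a b ro unfolding succs_def okv_def qv_def regs_ok_def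
    by (auto split: if_splits instr.splits simp: okg_def)
next
  case (VZ i)
  then show ?thesis using a b ro[unfolded regs_ok_def, rule_format, of i] unfolding succs_def okv_def qv_def
    by (auto split: instr.splits simp: okg_def)
next
  case (VN i)
  then show ?thesis using a b ro[unfolded regs_ok_def, rule_format, of i] unfolding succs_def okv_def qv_def
    by (auto split: instr.splits simp: okg_def)
next
  case (VH g) then show ?thesis using a b unfolding succs_def okv_def by auto
qed (use a b in \<open>auto simp: succs_def okv_def okg_def\<close>)

lemma idx_props: "x \<in> set (verts p K) \<Longrightarrow> idx p K x < length (verts p K) \<and> verts p K ! idx p K x = x"
  unfolding idx_def using distinct_Ex1[OF distinct_verts] by (rule theI') 

lemma idx_nth: "i < length (verts p K) \<Longrightarrow> idx p K (verts p K ! i) = i"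
  unfolding idx_def using distinct_verts by (auto simp: nth_eq_iff_index_eq intro!: the_equality)

lemma idx_inj: "x \<in> set (verts p K) \<Longrightarrow> y \<in> set (verts p K) \<Longrightarrow> idx p K x = idx p K y \<Longrightarrow> x = y"
  using idx_props by metis

lemma distinct_pairs: "distinct xs \<Longrightarrow> distinct (concat (map (\<lambda>a. map (Pair a) (remdups (F a))) xs))"
  by (induction xs) (auto simp: distinct_map inj_on_def)


lemma in_edges_inst: "(u, v, ws) \<in> set (edges (inst p K n)) \<longleftrightarrow>
   (\<exists>a b. a \<in> set (verts p K) \<and> b \<in> set (succs p K a) \<and> u = idx p K a \<and> v = idx p K b \<and> ws = wv p K a b)"
  unfolding inst_def by auto

lemma edge_set_inst: "edge_set (inst p K n) =
   {(idx p K a, idx p K b) | a b. a \<in> set (verts p K) \<and> b \<in> set (succs p K a)}"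
  unfolding edge_set_def using in_edges_inst by blast

lemma dim_inst[simp]: "dim (inst p K n) = Suc K" unfolding dim_def inst_def by simp
lemma num_v_inst[simp]: "num_v (inst p K n) = length (verts p K)" unfolding inst_def by simp

lemma wf_inst: assumes ro: "regs_ok p K" shows "well_formed (inst p K n)"
proof -
  let ?vs = "verts p K"
  have okb: "a \<in> set ?vs \<Longrightarrow> b \<in> set (succs p K a) \<Longrightarrow> b \<in> set ?vs" for a b
    using succs_in[OF ro] in_verts by blast
  have 1: "\<forall>(u, v, ws) \<in> set (edges (inst p K n)). u < num_v (inst p K n) \<and> v < num_v (inst p K n) \<and> length ws = dim (inst p K n)"
    using in_edges_inst[of _ _ _ p K n] idx_props okb length_wv by fastforce
  have "map (\<lambda>(u, v, ws). (u, v)) (edges (inst p K n)) =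
      map (\<lambda>(a, b). (idx p K a, idx p K b)) (concat (map (\<lambda>a. map (Pair a) (remdups (succs p K a))) ?vs))"
    unfolding inst_def by (simp add: map_concat comp_def)
  moreover have "distinct (map (\<lambda>(a, b). (idx p K a, idx p K b)) (concat (map (\<lambda>a. map (Pair a) (remdups (succs p K a))) ?vs)))"
  proof (rule distinct_map[THEN iffD2], rule conjI)
    show "distinct (concat (map (\<lambda>a. map (Pair a) (remdups (succs p K a))) ?vs))"
      by (rule distinct_pairs[OF distinct_verts])
    show "inj_on (\<lambda>(a, b). (idx p K a, idx p K b)) (set (concat (map (\<lambda>a. map (Pair a) (remdups (succs p K a))) ?vs)))"
    proof (rule inj_onI, clarify)
      fix a b a' b'
      assume m1: "(a, b) \<in> set (concat (map (\<lambda>a. map (Pair a) (remdups (succs p K a))) ?vs))"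
        and m2: "(a', b') \<in> set (concat (map (\<lambda>a. map (Pair a) (remdups (succs p K a))) ?vs))"
        and e1: "idx p K a = idx p K a'" and e2: "idx p K b = idx p K b'"
      have "a \<in> set ?vs" "b \<in> set ?vs" "a' \<in> set ?vs" "b' \<in> set ?vs" using m1 m2 okb by auto
      then show "a = a' \<and> b = b'" using e1 e2 idx_inj by blast
    qed
  qed
  ultimately have 2: "distinct (map (\<lambda>(u, v, ws). (u, v)) (edges (inst p K n)))" by simp
  have 3: "\<forall>u < num_v (inst p K n). \<exists>v. (u, v) \<in> edge_set (inst p K n)"
  proof (intro allI impI)
    fix u assume u: "u < num_v (inst p K n)"
    let ?a = "?vs ! u"
    have a: "?a \<in> set ?vs" using u by simp
    obtain b where b: "b \<in> set (succs p K ?a)" using succs_nonempty[of p K ?a] by (cases "succs p K ?a") auto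
    have "(idx p K ?a, idx p K b) \<in> edge_set (inst p K n)" unfolding edge_set_inst using a b by blast
    then show "\<exists>v. (u, v) \<in> edge_set (inst p K n)" using idx_nth u by auto
  qed
  have 4: "\<forall>x \<in> set (target (inst p K n)). x < num_v (inst p K n)"
    unfolding inst_def using idx_props[of VT p K] in_verts[of VT p K] by (simp add: okv_def)
  have 5: "init (inst p K n) < num_v (inst p K n)"
    unfolding inst_def using idx_props[of VP p K] in_verts[of VP p K] by (simp add: okv_def)
  show ?thesis unfolding well_formed_def using 1 2 3 4 5 by (simp add: inst_def)
qed

definition nm :: "instr list \<Rightarrow> nat \<Rightarrow> nat \<Rightarrow> vn" where "nm p K v = verts p K ! v"

lemma nm_idx: "okv p K x \<Longrightarrow> nm p K (idx p K x) = x"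
  unfolding nm_def using idx_props in_verts by blast
lemma idx_lt: "okv p K x \<Longrightarrow> idx p K x < length (verts p K)"
  using idx_props in_verts by blast
lemma okv_nm: "v < length (verts p K) \<Longrightarrow> okv p K (nm p K v)"
  unfolding nm_def using in_verts nth_mem by blast
lemma idx_nm: "v < length (verts p K) \<Longrightarrow> idx p K (nm p K v) = v"
  unfolding nm_def by (rule idx_nth)

lemma E1: assumes ro: "regs_ok p K" and u: "u < length (verts p K)"
  shows "(u, v) \<in> edge_set (inst p K n) \<longleftrightarrow> v < length (verts p K) \<and> nm p K v \<in> set (succs p K (nm p K u))"
proof
  assume "(u, v) \<in> edge_set (inst p K n)"
  then obtain a b where ab: "a \<in> set (verts p K)" "b \<in> set (succs p K a)" "u = idx p K a" "v = idx p K b"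
    unfolding edge_set_inst by blast
  have okb: "okv p K b" using succs_in[OF ro] ab in_verts by blast
  have "okv p K a" using ab(1) in_verts by blast
  then have "a = nm p K u" using ab(3) nm_idx[of p K a] by simp
  moreover have "b = nm p K v" using ab(4) okb nm_idx[of p K b] by simp
  ultimately show "v < length (verts p K) \<and> nm p K v \<in> set (succs p K (nm p K u))" using ab okb idx_lt by auto
next
  assume H: "v < length (verts p K) \<and> nm p K v \<in> set (succs p K (nm p K u))"
  have a: "nm p K u \<in> set (verts p K)" using u unfolding nm_def by simp
  have "(idx p K (nm p K u), idx p K (nm p K v)) \<in> edge_set (inst p K n)"
    unfolding edge_set_inst using a H by blast
  then show "(u, v) \<in> edge_set (inst p K n)" using idx_nm[OF u] idx_nm[of v p K] H by simp
qed

lemma E2: assumes ro: "regs_ok p K" and u: "u < length (verts p K)" and v: "v < length (verts p K)"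
  and e: "nm p K v \<in> set (succs p K (nm p K u))"
  shows "weight (inst p K n) j u v = wv p K (nm p K u) (nm p K v) ! j"
proof -
  have ex: "(u, v, wv p K (nm p K u) (nm p K v)) \<in> set (edges (inst p K n))"
    unfolding in_edges_inst using u v e idx_nm okv_nm in_verts by metis
  have un: "ws = wv p K (nm p K u) (nm p K v)" if H: "(u, v, ws) \<in> set (edges (inst p K n))" for ws
  proof -
    obtain a b where ab: "a \<in> set (verts p K)" "b \<in> set (succs p K a)" "u = idx p K a" "v = idx p K b" "ws = wv p K a b"
      using H unfolding in_edges_inst by blast
    have okb: "okv p K b" using succs_in[OF ro] ab in_verts by blast
    show ?thesis using ab okb nm_idx in_verts by metis
  qed
  have "(THE ws. (u, v, ws) \<in> set (edges (inst p K n))) = wv p K (nm p K u) (nm p K v)"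
    using ex un by blast
  then show ?thesis unfolding weight_def by simp
qed

lemma E3: "v < length (verts p K) \<Longrightarrow> is_Eve (inst p K n) v = eveN (nm p K v)"
  unfolding is_Eve_def inst_def nm_def by simp

lemma E4: "v < length (verts p K) \<Longrightarrow> v \<in> set (target (inst p K n)) \<longleftrightarrow> nm p K v = VT"
  unfolding inst_def using nm_idx[of p K VT] idx_nm[of v p K] by (auto simp: okv_def)

lemma init_inst: "init (inst p K n) = idx p K VP" unfolding inst_def by simp
lemma thr_inst: "thr (inst p K n) = int n # replicate K 0" unfolding inst_def by simp




lemma out_hist_map: "out_hist I sE sA v0 k = map (outcome I sE sA v0) [0..<Suc k]"
proof (induction k)
  case 0 then show ?case by (simp add: outcome_def)
next
  case (Suc k)
  have "outcome I sE sA v0 (Suc k) = last (out_hist I sE sA v0 (Suc k))" by (simp add: outcome_def)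
  then show ?case using Suc by (simp add: Let_def)
qed

lemma outcome_Suc: "outcome I sE sA v0 (Suc k) =
   (if is_Eve I (outcome I sE sA v0 k) then sE else sA) (out_hist I sE sA v0 k)"
  by (simp add: outcome_def Let_def)

lemma outcome_0: "outcome I sE sA v0 0 = v0" by (simp add: outcome_def)

lemma last_out_hist: "last (out_hist I sE sA v0 k) = outcome I sE sA v0 k" by (simp add: outcome_def)
lemma out_hist_ne: "out_hist I sE sA v0 k \<noteq> []" by (simp add: out_hist_map)

definition hw :: "sp_instance \<Rightarrow> nat list \<Rightarrow> nat \<Rightarrow> int" where
  "hw I h j = (\<Sum>i = 1..<length h. weight I j (h ! (i - 1)) (h ! i))"

definition Wt :: "sp_instance \<Rightarrow> (nat \<Rightarrow> nat) \<Rightarrow> nat \<Rightarrow> nat \<Rightarrow> int" where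
  "Wt I \<pi> k j = (\<Sum>i = 1..k. weight I j (\<pi> (i - 1)) (\<pi> i))"

lemma Wt_0[simp]: "Wt I \<pi> 0 j = 0" by (simp add: Wt_def)
lemma Wt_Suc: "Wt I \<pi> (Suc k) j = Wt I \<pi> k j + weight I j (\<pi> k) (\<pi> (Suc k))"
  by (simp add: Wt_def)

lemma hw_out_hist: "hw I (out_hist I sE sA v0 k) j = Wt I (outcome I sE sA v0) k j"
proof -
  have "hw I (out_hist I sE sA v0 k) j = (\<Sum>i = 1..<Suc k. weight I j (outcome I sE sA v0 (i - 1)) (outcome I sE sA v0 i))"
    unfolding hw_def out_hist_map
    by (rule sum.cong) (auto simp del: upt_Suc)
  also have "\<dots> = Wt I (outcome I sE sA v0) k j" unfolding Wt_def by (rule sum.cong) auto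
  finally show ?thesis .
qed

lemma outcome_valid:
  assumes wf: "well_formed I" and sE: "strategy_Eve I sE" and sA: "strategy_Adam I sA" and v0: "v0 < num_v I"
  shows "outcome I sE sA v0 k < num_v I \<and> (outcome I sE sA v0 k, outcome I sE sA v0 (Suc k)) \<in> edge_set I"
proof (induction k)
  have edge_lt: "(u, v) \<in> edge_set I \<Longrightarrow> v < num_v I" for u v
    using wf unfolding well_formed_def edge_set_def by fastforce
  {
    fix k assume lt: "outcome I sE sA v0 k < num_v I"
    have "(outcome I sE sA v0 k, outcome I sE sA v0 (Suc k)) \<in> edge_set I"
    proof (cases "is_Eve I (outcome I sE sA v0 k)")
      case True
      then show ?thesis using sE[unfolded strategy_Eve_def, rule_format, OF out_hist_ne] lt
        by (simp add: outcome_Suc last_out_hist)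
    next
      case False
      then show ?thesis using sA[unfolded strategy_Adam_def, rule_format, OF out_hist_ne] lt
        by (simp add: outcome_Suc last_out_hist)
    qed
  } note step = this
  case 0 then show ?case using v0 step[of 0] by (simp add: outcome_0)
  case (Suc k)
  then have "outcome I sE sA v0 (Suc k) < num_v I" using edge_lt by blast
  then show ?case using step by blast
qed




definition sim :: "nat \<Rightarrow> nat \<Rightarrow> (nat \<Rightarrow> nat) \<Rightarrow> (nat \<Rightarrow> int) \<Rightarrow> bool" where
  "sim K m R W \<longleftrightarrow> W 0 = int m \<and> (\<forall>j<K. W (Suc j) = int (R j))"

definition reach :: "instr list \<Rightarrow> nat \<Rightarrow> config \<Rightarrow> bool" where
  "reach p m c \<longleftrightarrow> (\<exists>t. (step p ^^ t) (0, R0 m) = c)"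

lemma reach_step: "reach p m c \<Longrightarrow> reach p m (step p c)"
  unfolding reach_def by (metis funpow.simps(2) comp_apply)

lemma reach_halts: "reach p m c \<Longrightarrow> length p \<le> fst c \<Longrightarrow> halts p m"
  unfolding reach_def halts_def by auto

lemma reach_0: "reach p m (0, R0 m)" unfolding reach_def by (rule exI[of _ 0]) simp

lemma unitv_nth: "j < Suc K \<Longrightarrow> unitv K d ! j = (if j = d then 1 else 0)"
  unfolding unitv_def by (simp del: upt_Suc)
lemma nunitv_nth: "j < Suc K \<Longrightarrow> map uminus (unitv K d) ! j = (if j = d then -1 else 0)"
  unfolding unitv_def by (simp del: upt_Suc)
lemma zerov_nth: "j < Suc K \<Longrightarrow> zerov K ! j = 0"
  unfolding zerov_def by (simp del: replicate_Suc)
lemma pumpv_nth: "j < Suc K \<Longrightarrow> pumpv K ! j = (if j \<le> 1 then 1 else 0)"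
  unfolding pumpv_def by (simp del: upt_Suc)

lemmas vec_nth = unitv_nth nunitv_nth zerov_nth pumpv_nth

lemma step_Inc_c: "fst c < length p \<Longrightarrow> p ! fst c = Inc r j \<Longrightarrow> step p c = (j, (snd c)(r := Suc (snd c r)))"
  unfolding step_def by (auto split: prod.splits)
lemma step_Dec_c: "fst c < length p \<Longrightarrow> p ! fst c = Dec r jz jnz \<Longrightarrow>
  step p c = (if snd c r = 0 then (jz, snd c) else (jnz, (snd c)(r := snd c r - 1)))"
  unfolding step_def by (auto split: prod.splits)

fun bad :: "instr list \<Rightarrow> gk \<Rightarrow> (nat \<Rightarrow> int) \<Rightarrow> bool" where
  "bad p GF W = (\<exists>m. W 0 = int m \<and> halts p m)"
| "bad p (GZ r) W = (W (Suc r) \<noteq> 0)"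
| "bad p (GP r) W = (W (Suc r) < 0)"

definition InvB :: "instr list \<Rightarrow> nat \<Rightarrow> vn \<Rightarrow> (nat \<Rightarrow> int) \<Rightarrow> bool" where
  "InvB p K x W \<longleftrightarrow>
     (x = VP \<and> (\<exists>m. sim K m (R0 m) W))
   \<or> (\<exists>m c. reach p m c \<and> x = VQ (min (fst c) (length p)) \<and> sim K m (snd c) W)
   \<or> (\<exists>m c r jz jnz. reach p m c \<and> fst c < length p \<and> p ! fst c = Dec r jz jnz \<and> x = VZ (fst c) \<and> sim K m (snd c) W)
   \<or> (\<exists>m c r jz jnz. reach p m c \<and> fst c < length p \<and> p ! fst c = Dec r jz jnz \<and> x = VN (fst c) \<and>
        W 0 = int m \<and> (\<forall>j<K. W (Suc j) = int (snd c j) - (if j = r then 1 else 0)))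
   \<or> (\<exists>g. okg K g \<and> bad p g W \<and> (x = VH g \<or> (\<exists>j s. x = VM g j s) \<or> x = VT))"

definition chooseA :: "instr list \<Rightarrow> vn \<Rightarrow> (nat \<Rightarrow> int) \<Rightarrow> vn" where
  "chooseA p x W = (case x of
      VZ i \<Rightarrow> (case p ! i of Dec r jz jnz \<Rightarrow> (if W (Suc r) \<noteq> 0 then VH (GZ r) else qv p jz) | Inc r j \<Rightarrow> VT)
    | VN i \<Rightarrow> (case p ! i of Dec r jz jnz \<Rightarrow> (if W (Suc r) < 0 then VH (GP r) else qv p jnz) | Inc r j \<Rightarrow> VT)
    | _ \<Rightarrow> VT)"

lemma chooseA_in: "\<not> eveN x \<Longrightarrow> chooseA p x W \<in> set (succs p K x)"
  unfolding chooseA_def succs_def eveN_def by (auto split: vn.splits instr.splits)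


lemma wv_VP: "wv p K VP v = (if v = VP then pumpv K else zerov K)" unfolding wv_def by simp
lemma wv_VQ: "wv p K (VQ i) v = (if i < length p then (case p ! i of Inc r j \<Rightarrow> unitv K (Suc r)
                  | Dec r jz jnz \<Rightarrow> (if v = VN i then map uminus (unitv K (Suc r)) else zerov K)) else zerov K)"
  unfolding wv_def by simp
lemma wv_VZ: "wv p K (VZ i) v = zerov K" unfolding wv_def by simp
lemma wv_VN: "wv p K (VN i) v = zerov K" unfolding wv_def by simp
lemma wv_VT: "wv p K VT v = zerov K" unfolding wv_def by simp
lemma wv_VM: "wv p K (VM g j s) v = zerov K" unfolding wv_def by simp
lemma wv_VH_VT: "wv p K (VH g) VT = zerov K" unfolding wv_def by simp
lemma wv_VH_VM: "wv p K (VH g) (VM g' j s) = (if s then unitv K (Suc j) else map uminus (unitv K (Suc j)))"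
  unfolding wv_def by simp

lemma succs_VH: "x' \<in> set (succs p K (VH g)) \<longleftrightarrow> x' = VT \<or> (\<exists>j s. x' = VM g j s \<and> j < K \<and> allowed g j s)"
  unfolding succs_def by auto

lemma sim_upd: "sim K m R W \<Longrightarrow> sim K m R' W' \<longleftrightarrow> W' 0 = W 0 \<and> (\<forall>j<K. W' (Suc j) = int (R' j))"
  unfolding sim_def by auto

lemma InvB_E_step:
  assumes ok: "okg K g" and b: "bad p g W" and xs: "x' \<in> set (succs p K (VH g))"
    and W': "\<forall>j<Suc K. W' j = W j + wv p K (VH g) x' ! j"
  shows "\<exists>g. okg K g \<and> bad p g W' \<and> (x' = VH g \<or> (\<exists>j s. x' = VM g j s) \<or> x' = VT)"
proof -
  consider "x' = VT" | j s where "x' = VM g j s" "j < K" "allowed g j s" using xs succs_VH by blast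
  then show ?thesis
  proof cases
    case 1
    then have "\<forall>j<Suc K. W' j = W j" using W' by (simp add: wv_VH_VT zerov_nth)
    then have "bad p g W'" using b ok by (cases g) (auto simp: okg_def)
    then show ?thesis using 1 ok by blast
  next
    case 2
    then have w: "\<forall>i<Suc K. W' i = W i + (if i = Suc j then (if s then 1 else -1) else 0)"
      using W' by (auto simp: wv_VH_VM vec_nth)
    have "bad p g W'"
    proof (cases g)
      case GF then show ?thesis using b w by auto
    next
      case (GZ r) then show ?thesis using b w 2 ok by (auto simp: okg_def)
    next
      case (GP r) then show ?thesis using b w 2 ok by (auto simp: okg_def)
    qed
    then show ?thesis using 2 ok by blast
  qed
qed


lemma InvB_step:
  assumes ro: "regs_ok p K" and inv: "InvB p K x W" and okx: "okv p K x" and xs: "x' \<in> set (succs p K x)"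
    and ad: "\<not> eveN x \<Longrightarrow> x' = chooseA p x W"
    and W': "\<forall>j<Suc K. W' j = W j + wv p K x x' ! j"
  shows "InvB p K x' W'"
  using inv[unfolded InvB_def]
proof (elim disjE exE conjE)
  fix m assume x: "x = VP" and sm: "sim K m (R0 m) W"
  have "x' = VP \<or> x' = VQ 0" using xs x by (simp add: succs_def)
  then show ?thesis
  proof
    assume x': "x' = VP"
    have "sim K (Suc m) (R0 (Suc m)) W'"
      using sm W' x x' by (auto simp: sim_def wv_VP vec_nth R0_def)
    then show ?thesis unfolding InvB_def using x' by blast
  next
    assume x': "x' = VQ 0"
    have "sim K m (R0 m) W'" using sm W' x x' by (auto simp: sim_def wv_VP vec_nth)
    then show ?thesis unfolding InvB_def using x' reach_0[of p m] by fastforce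
  qed
next
  fix m c assume rc: "reach p m c" and x: "x = VQ (min (fst c) (length p))" and sm: "sim K m (snd c) W"
  show ?thesis
  proof (cases "fst c < length p")
    case False
    then have x': "x' = VH GF" and "W' = W \<or> True" using xs x by (auto simp: succs_def)
    have "\<forall>j<Suc K. W' j = W j" using W' x False by (simp add: wv_VQ vec_nth)
    then have "bad p GF W'" using sm reach_halts[OF rc] False by (auto simp: sim_def)
    then show ?thesis unfolding InvB_def using x' by (auto simp: okg_def)
  next
    case True
    then have x2: "x = VQ (fst c)" using x by simp
    have rlt: "ireg (p ! fst c) < K" using ro True by (simp add: regs_ok_def)
    show ?thesis
    proof (cases "p ! fst c")
      case (Inc r j)
      then have x': "x' = qv p j" using xs x2 True by (simp add: succs_def)
      have st: "step p c = (j, (snd c)(r := Suc (snd c r)))" by (rule step_Inc_c[OF True Inc])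
      have "sim K m ((snd c)(r := Suc (snd c r))) W'"
        using sm W' x2 True Inc rlt by (auto simp: sim_def wv_VQ vec_nth)
      moreover have "reach p m (j, (snd c)(r := Suc (snd c r)))" using reach_step[OF rc] st by simp
      ultimately show ?thesis unfolding InvB_def x' qv_def by fastforce
    next
      case (Dec r jz jnz)
      then have "x' = VZ (fst c) \<or> x' = VN (fst c)" using xs x2 True by (simp add: succs_def)
      then show ?thesis
      proof
        assume x': "x' = VZ (fst c)"
        have "sim K m (snd c) W'" using sm W' x2 x' True Dec by (auto simp: sim_def wv_VQ vec_nth)
        then show ?thesis unfolding InvB_def using x' rc True Dec by blast
      next
        assume x': "x' = VN (fst c)"
        have "W' 0 = int m \<and> (\<forall>j<K. W' (Suc j) = int (snd c j) - (if j = r then 1 else 0))"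
          using sm W' x2 x' True Dec by (auto simp: sim_def wv_VQ vec_nth)
        then show ?thesis unfolding InvB_def using x' rc True Dec by blast
      qed
    qed
  qed
next
  fix m c r jz jnz assume rc: "reach p m c" and lt: "fst c < length p" and pd: "p ! fst c = Dec r jz jnz"
    and x: "x = VZ (fst c)" and sm: "sim K m (snd c) W"
  have x': "x' = chooseA p x W" using ad x by (simp add: eveN_def)
  have WW: "\<forall>j<Suc K. W' j = W j" using W' x by (simp add: wv_VZ vec_nth)
  have rlt: "r < K" using ro lt pd by (metis ireg.simps(2) regs_ok_def)
  show ?thesis
  proof (cases "W (Suc r) = 0")
    case False
    then have "x' = VH (GZ r)" using x' x pd by (simp add: chooseA_def)
    moreover have "bad p (GZ r) W'" using WW False rlt by simp
    ultimately show ?thesis unfolding InvB_def using rlt by (auto simp: okg_def)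
  next
    case True
    then have x'': "x' = qv p jz" using x' x pd by (simp add: chooseA_def)
    have "snd c r = 0" using True sm rlt by (simp add: sim_def)
    then have st: "step p c = (jz, snd c)" using step_Dec_c[OF lt pd] by simp
    have "sim K m (snd c) W'" using sm WW by (simp add: sim_def)
    moreover have "reach p m (jz, snd c)" using reach_step[OF rc] st by simp
    ultimately show ?thesis unfolding InvB_def x'' qv_def by fastforce
  qed
next
  fix m c r jz jnz assume rc: "reach p m c" and lt: "fst c < length p" and pd: "p ! fst c = Dec r jz jnz"
    and x: "x = VN (fst c)" and w0: "W 0 = int m" and wj: "\<forall>j<K. W (Suc j) = int (snd c j) - (if j = r then 1 else 0)"
  have x': "x' = chooseA p x W" using ad x by (simp add: eveN_def)
  have WW: "\<forall>j<Suc K. W' j = W j" using W' x by (simp add: wv_VN vec_nth)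
  have rlt: "r < K" using ro lt pd by (metis ireg.simps(2) regs_ok_def)
  show ?thesis
  proof (cases "W (Suc r) < 0")
    case True
    then have "x' = VH (GP r)" using x' x pd by (simp add: chooseA_def)
    moreover have "bad p (GP r) W'" using WW True rlt by simp
    ultimately show ?thesis unfolding InvB_def using rlt by (auto simp: okg_def)
  next
    case False
    then have x'': "x' = qv p jnz" using x' x pd by (simp add: chooseA_def)
    have pos: "snd c r \<noteq> 0" using False wj rlt by auto
    then have st: "step p c = (jnz, (snd c)(r := snd c r - 1))" using step_Dec_c[OF lt pd] by simp
    have "sim K m ((snd c)(r := snd c r - 1)) W'" using w0 wj WW pos by (auto simp: sim_def of_nat_diff)
    moreover have "reach p m (jnz, (snd c)(r := snd c r - 1))" using reach_step[OF rc] st by simp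
    ultimately show ?thesis unfolding InvB_def x'' qv_def by fastforce
  qed
next
  fix g assume ok: "okg K g" and b: "bad p g W" and x: "x = VH g"
  show ?thesis using InvB_E_step[OF ok b xs[unfolded x] W'[unfolded x]] unfolding InvB_def by blast
next
  fix g j s assume ok: "okg K g" and b: "bad p g W" and x: "x = VM g j s"
  then have x': "x' = VH g" using xs by (simp add: succs_def)
  have "\<forall>j<Suc K. W' j = W j" using W' x by (simp add: wv_VM vec_nth)
  then have "bad p g W'" using b ok by (cases g) (auto simp: okg_def)
  then show ?thesis unfolding InvB_def using x' ok by blast
next
  fix g assume ok: "okg K g" and b: "bad p g W" and x: "x = VT"
  then have x': "x' = VT" using xs by (simp add: succs_def)
  have "\<forall>j<Suc K. W' j = W j" using W' x by (simp add: wv_VT vec_nth)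
  then have "bad p g W'" using b ok by (cases g) (auto simp: okg_def)
  then show ?thesis unfolding InvB_def using x' ok by blast
qed


lemma play_facts:
  assumes ro: "regs_ok p K" and sE: "strategy_Eve (inst p K n) sE" and sA: "strategy_Adam (inst p K n) sA"
    and pi: "\<pi> = outcome (inst p K n) sE sA (init (inst p K n))"
  shows "\<pi> k < length (verts p K) \<and> nm p K (\<pi> (Suc k)) \<in> set (succs p K (nm p K (\<pi> k)))
    \<and> (\<forall>j<Suc K. Wt (inst p K n) \<pi> (Suc k) j = Wt (inst p K n) \<pi> k j + wv p K (nm p K (\<pi> k)) (nm p K (\<pi> (Suc k))) ! j)
    \<and> \<pi> (Suc k) = (if eveN (nm p K (\<pi> k)) then sE else sA) (out_hist (inst p K n) sE sA (init (inst p K n)) k)"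
proof -
  let ?I = "inst p K n"
  have i0: "init ?I < num_v ?I" using wf_inst[OF ro, of n] unfolding well_formed_def by simp
  have v: "\<pi> k < num_v ?I \<and> (\<pi> k, \<pi> (Suc k)) \<in> edge_set ?I"
    using outcome_valid[OF wf_inst[OF ro] sE sA i0] pi by simp
  then have lt: "\<pi> k < length (verts p K)" by simp
  have e: "\<pi> (Suc k) < length (verts p K) \<and> nm p K (\<pi> (Suc k)) \<in> set (succs p K (nm p K (\<pi> k)))"
    using E1[OF ro lt] v by blast
  have w: "\<forall>j<Suc K. Wt ?I \<pi> (Suc k) j = Wt ?I \<pi> k j + wv p K (nm p K (\<pi> k)) (nm p K (\<pi> (Suc k))) ! j"
    using E2[OF ro lt] e by (simp add: Wt_Suc)
  have o: "\<pi> (Suc k) = (if eveN (nm p K (\<pi> k)) then sE else sA) (out_hist ?I sE sA (init ?I) k)"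
    using outcome_Suc[of ?I sE sA "init ?I" k] E3[OF lt] pi by simp
  show ?thesis using lt e w o by blast
qed

lemma play_0:
  assumes "\<pi> = outcome (inst p K n) sE sA (init (inst p K n))"
  shows "nm p K (\<pi> 0) = VP"
  using assms by (simp add: outcome_0 init_inst nm_idx okv_def)

lemma cost_thr:
  assumes c: "cost (inst p K n) \<pi> = Some (thr (inst p K n))"
  shows "\<exists>l. \<pi> l \<in> set (target (inst p K n)) \<and> Wt (inst p K n) \<pi> l 0 = int n \<and> (\<forall>j<K. Wt (inst p K n) \<pi> l (Suc j) = 0)"
proof -
  let ?I = "inst p K n"
  have ex: "\<exists>l. \<pi> l \<in> set (target ?I)" using c unfolding cost_def by (auto split: if_splits)
  define l where "l = (LEAST l. \<pi> l \<in> set (target ?I))"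
  have l: "\<pi> l \<in> set (target ?I)" unfolding l_def using ex by (rule LeastI_ex)
  have "map (\<lambda>i. Wt ?I \<pi> l i) [0..<Suc K] = int n # replicate K 0"
    using c ex unfolding cost_def l_def Wt_def by (simp add: thr_inst Let_def del: upt_Suc)
  then have m: "\<forall>i<Suc K. Wt ?I \<pi> l i = (int n # replicate K 0) ! i"
    by (metis (no_types, lifting) diff_zero length_upt nth_map nth_upt plus_nat.add_0)
  have "Wt ?I \<pi> l 0 = int n" using m[rule_format, of 0] by simp
  moreover have "\<forall>j<K. Wt ?I \<pi> l (Suc j) = 0" using m by auto
  ultimately show ?thesis using l by blast
qed

lemma not_halts_lose:
  assumes ro: "regs_ok p K" and nh: "\<not> halts p n"
  shows "\<not> Eve_wins_equality (inst p K n)"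
proof
  let ?I = "inst p K n"
  assume "Eve_wins_equality ?I"
  then obtain sE where sE: "strategy_Eve ?I sE"
    and win: "\<forall>sA. strategy_Adam ?I sA \<longrightarrow> cost ?I (outcome ?I sE sA (init ?I)) = Some (thr ?I)"
    unfolding Eve_wins_equality_def by blast
  define sA where "sA h = idx p K (chooseA p (nm p K (last h)) (hw ?I h))" for h
  have sA: "strategy_Adam ?I sA" unfolding strategy_Adam_def
  proof (intro allI impI)
    fix h assume h: "h \<noteq> []" "last h < num_v ?I" "\<not> is_Eve ?I (last h)"
    let ?x = "nm p K (last h)"
    have lt: "last h < length (verts p K)" using h by simp
    have ne: "\<not> eveN ?x" using h(3) E3[OF lt] by simp
    have c: "chooseA p ?x (hw ?I h) \<in> set (succs p K ?x)" by (rule chooseA_in[OF ne])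
    have okc: "okv p K (chooseA p ?x (hw ?I h))" using succs_in[OF ro okv_nm[OF lt] c] .
    show "(last h, sA h) \<in> edge_set ?I" unfolding sA_def
      using E1[OF ro lt] c okc idx_lt nm_idx by metis
  qed
  define \<pi> where "\<pi> = outcome ?I sE sA (init ?I)"
  note pf = play_facts[OF ro sE sA \<pi>_def]
  have inv: "InvB p K (nm p K (\<pi> k)) (Wt ?I \<pi> k)" for k
  proof (induction k)
    case 0
    have "sim K 0 (R0 0) (Wt ?I \<pi> 0)" by (simp add: sim_def R0_def)
    then show ?case using play_0[OF \<pi>_def] unfolding InvB_def by auto
  next
    case (Suc k)
    have f: "\<pi> k < length (verts p K)" "nm p K (\<pi> (Suc k)) \<in> set (succs p K (nm p K (\<pi> k)))"
      "\<forall>j<Suc K. Wt ?I \<pi> (Suc k) j = Wt ?I \<pi> k j + wv p K (nm p K (\<pi> k)) (nm p K (\<pi> (Suc k))) ! j"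
      "\<pi> (Suc k) = (if eveN (nm p K (\<pi> k)) then sE else sA) (out_hist ?I sE sA (init ?I) k)"
      using pf[of k] by blast+
    have ad: "nm p K (\<pi> (Suc k)) = chooseA p (nm p K (\<pi> k)) (Wt ?I \<pi> k)" if ne: "\<not> eveN (nm p K (\<pi> k))"
    proof -
      have hw: "hw ?I (out_hist ?I sE sA (init ?I) k) = Wt ?I \<pi> k"
        using hw_out_hist \<pi>_def by blast
      have lh: "last (out_hist ?I sE sA (init ?I) k) = \<pi> k" using last_out_hist \<pi>_def by simp
      have "\<pi> (Suc k) = sA (out_hist ?I sE sA (init ?I) k)" using f(4) ne by simp
      also have "\<dots> = idx p K (chooseA p (nm p K (last (out_hist ?I sE sA (init ?I) k))) (hw ?I (out_hist ?I sE sA (init ?I) k)))"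
        by (simp only: sA_def)
      also have "\<dots> = idx p K (chooseA p (nm p K (\<pi> k)) (Wt ?I \<pi> k))" by (simp only: lh hw)
      finally have "\<pi> (Suc k) = idx p K (chooseA p (nm p K (\<pi> k)) (Wt ?I \<pi> k))" .
      moreover have "okv p K (chooseA p (nm p K (\<pi> k)) (Wt ?I \<pi> k))"
        using succs_in[OF ro okv_nm[OF f(1)] chooseA_in[OF ne]] .
      ultimately show ?thesis using nm_idx by simp
    qed
    show ?case by (rule InvB_step[OF ro Suc okv_nm[OF f(1)] f(2) ad f(3)])
  qed
  have "cost ?I \<pi> = Some (thr ?I)" using win sA \<pi>_def by blast
  then obtain l where l: "\<pi> l \<in> set (target ?I)" "Wt ?I \<pi> l 0 = int n" "\<forall>j<K. Wt ?I \<pi> l (Suc j) = 0"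
    using cost_thr by blast
  have "nm p K (\<pi> l) = VT" using E4 l(1) pf[of l] by blast
  then obtain g where g: "okg K g" "bad p g (Wt ?I \<pi> l)" using inv[of l] unfolding InvB_def by auto
  show False
  proof (cases g)
    case GF then show False using g l nh by auto
  next
    case (GZ r) then show False using g l by (auto simp: okg_def)
  next
    case (GP r) then show False using g l by (auto simp: okg_def)
  qed
qed




definition red :: "bool \<Rightarrow> int \<Rightarrow> bool" where "red s w = (if s then w < 0 else 0 < w)"

definition redex :: "nat \<Rightarrow> gk \<Rightarrow> (nat \<Rightarrow> int) \<Rightarrow> nat \<times> bool \<Rightarrow> bool" where
  "redex K g W js \<longleftrightarrow> fst js < K \<and> allowed g (fst js) (snd js) \<and> red (snd js) (W (Suc (fst js)))"

definition chooseE :: "instr list \<Rightarrow> nat \<Rightarrow> nat \<Rightarrow> vn \<Rightarrow> (nat \<Rightarrow> int) \<Rightarrow> vn" where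
  "chooseE p K n x W = (case x of
      VP \<Rightarrow> (if W 0 < int n then VP else VQ 0)
    | VQ i \<Rightarrow> (if i < length p then (case p ! i of Inc r j \<Rightarrow> qv p j
                 | Dec r jz jnz \<Rightarrow> (if W (Suc r) = 0 then VZ i else VN i)) else VH GF)
    | VH g \<Rightarrow> (if (\<exists>js. redex K g W js) then (let js = (SOME js. redex K g W js) in VM g (fst js) (snd js)) else VT)
    | VM g j s \<Rightarrow> VH g
    | _ \<Rightarrow> VT)"

lemma chooseE_in: "eveN x \<Longrightarrow> chooseE p K n x W \<in> set (succs p K x)"
proof (cases x)
  case (VH g)
  show ?thesis
  proof (cases "\<exists>js. redex K g W js")
    case True
    let ?js = "SOME js. redex K g W js"
    have "redex K g W ?js" using True by (rule someI_ex)
    then show ?thesis using VH True unfolding chooseE_def succs_def redex_def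
      by (cases ?js) (auto simp: Let_def)
  next
    case False then show ?thesis using VH unfolding chooseE_def succs_def by auto
  qed
qed (auto simp: chooseE_def succs_def eveN_def split: instr.splits)

fun good :: "nat \<Rightarrow> gk \<Rightarrow> (nat \<Rightarrow> int) \<Rightarrow> bool" where
  "good n GF W = (W 0 = int n)"
| "good n (GZ r) W = (W 0 = int n \<and> W (Suc r) = 0)"
| "good n (GP r) W = (W 0 = int n \<and> W (Suc r) \<ge> 0)"

definition InvA :: "instr list \<Rightarrow> nat \<Rightarrow> nat \<Rightarrow> vn \<Rightarrow> (nat \<Rightarrow> int) \<Rightarrow> bool" where
  "InvA p K n x W \<longleftrightarrow>
     (x = VP \<and> (\<exists>m\<le>n. sim K m (R0 m) W))
   \<or> (\<exists>c. reach p n c \<and> x = VQ (min (fst c) (length p)) \<and> sim K n (snd c) W)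
   \<or> (\<exists>c r jz jnz. reach p n c \<and> fst c < length p \<and> p ! fst c = Dec r jz jnz \<and> snd c r = 0 \<and> x = VZ (fst c) \<and> sim K n (snd c) W)
   \<or> (\<exists>c r jz jnz. reach p n c \<and> fst c < length p \<and> p ! fst c = Dec r jz jnz \<and> snd c r \<noteq> 0 \<and> x = VN (fst c) \<and>
        W 0 = int n \<and> (\<forall>j<K. W (Suc j) = int (snd c j) - (if j = r then 1 else 0)))
   \<or> (\<exists>g. okg K g \<and> good n g W \<and> (x = VH g \<or> (\<exists>j s. x = VM g j s)))
   \<or> (x = VT \<and> W 0 = int n \<and> (\<forall>j<K. W (Suc j) = 0))"

lemma good_keep: "okg K g \<Longrightarrow> good n g W \<Longrightarrow> \<forall>j<Suc K. W' j = W j \<Longrightarrow> good n g W'"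
  by (cases g) (auto simp: okg_def)

lemma InvA_hub_step:
  assumes ok: "okg K g" and gd: "good n g W" and x': "x' = chooseE p K n (VH g) W"
    and W': "\<forall>j<Suc K. W' j = W j + wv p K (VH g) x' ! j"
  shows "InvA p K n x' W'"
proof (cases "\<exists>js. redex K g W js")
  case True
  let ?js = "SOME js. redex K g W js"
  obtain j s where js: "?js = (j, s)" by (cases ?js)
  have rx: "redex K g W (j, s)" using someI_ex[OF True] js by simp
  have x'': "x' = VM g j s" using x' True js by (simp add: chooseE_def Let_def)
  have w: "\<forall>i<Suc K. W' i = W i + (if i = Suc j then (if s then 1 else -1) else 0)"
    using W' x'' by (auto simp: wv_VH_VM vec_nth)
  have "good n g W'"
  proof (cases g)
    case GF then show ?thesis using gd w by auto
  next
    case (GZ r) then show ?thesis using gd w rx ok by (auto simp: okg_def redex_def)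
  next
    case (GP r) then show ?thesis using gd w rx ok by (auto simp: okg_def redex_def red_def)
  qed
  then show ?thesis unfolding InvA_def using x'' ok by blast
next
  case False
  then have x'': "x' = VT" using x' by (simp add: chooseE_def)
  have WW: "\<forall>i<Suc K. W' i = W i" using W' x'' by (simp add: wv_VH_VT vec_nth)
  have z: "W (Suc j) = 0" if j: "j < K" for j
  proof -
    have a: "\<not> (allowed g j True \<and> W (Suc j) < 0)" "\<not> (allowed g j False \<and> 0 < W (Suc j))"
      using False j unfolding redex_def red_def by (metis fst_conv snd_conv)+
    show ?thesis
    proof (cases g)
      case GF then show ?thesis using a by auto
    next
      case (GZ r) then show ?thesis using a gd by (cases "j = r") auto
    next
      case (GP r) then show ?thesis using a gd by (cases "j = r") auto
    qed
  qed
  have "W 0 = int n" using gd by (cases g) auto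
  then show ?thesis unfolding InvA_def using x'' WW z by auto
qed


lemma InvA_step:
  assumes ro: "regs_ok p K" and inv: "InvA p K n x W" and okx: "okv p K x" and xs: "x' \<in> set (succs p K x)"
    and ev: "eveN x \<Longrightarrow> x' = chooseE p K n x W"
    and W': "\<forall>j<Suc K. W' j = W j + wv p K x x' ! j"
  shows "InvA p K n x' W'"
  using inv[unfolded InvA_def]
proof (elim disjE exE conjE)
  fix m assume x: "x = VP" and mn: "m \<le> n" and sm: "sim K m (R0 m) W"
  have x': "x' = chooseE p K n VP W" using ev x by (simp add: eveN_def)
  show ?thesis
  proof (cases "m < n")
    case True
    then have x'': "x' = VP" using x' sm by (simp add: chooseE_def sim_def)
    have "sim K (Suc m) (R0 (Suc m)) W'"
      using sm W' x x'' by (auto simp: sim_def wv_VP vec_nth R0_def)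
    then show ?thesis unfolding InvA_def using x'' True by (auto intro!: exI[of _ "Suc m"])
  next
    case False
    then have mn': "m = n" using mn by simp
    then have x'': "x' = VQ 0" using x' sm by (simp add: chooseE_def sim_def)
    have "sim K n (R0 n) W'" using sm W' x x'' mn' by (auto simp: sim_def wv_VP vec_nth)
    then show ?thesis unfolding InvA_def using x'' reach_0[of p n] by fastforce
  qed
next
  fix c assume rc: "reach p n c" and x: "x = VQ (min (fst c) (length p))" and sm: "sim K n (snd c) W"
  show ?thesis
  proof (cases "fst c < length p")
    case False
    then have x': "x' = VH GF" using xs x by (auto simp: succs_def)
    have "\<forall>j<Suc K. W' j = W j" using W' x False by (simp add: wv_VQ vec_nth)
    then have "good n GF W'" using sm by (auto simp: sim_def)
    then show ?thesis unfolding InvA_def using x' by (auto simp: okg_def)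
  next
    case True
    then have x2: "x = VQ (fst c)" using x by simp
    have rlt: "ireg (p ! fst c) < K" using ro True by (simp add: regs_ok_def)
    show ?thesis
    proof (cases "p ! fst c")
      case (Inc r j)
      then have x': "x' = qv p j" using xs x2 True by (simp add: succs_def)
      have st: "step p c = (j, (snd c)(r := Suc (snd c r)))" by (rule step_Inc_c[OF True Inc])
      have "sim K n ((snd c)(r := Suc (snd c r))) W'"
        using sm W' x2 True Inc rlt by (auto simp: sim_def wv_VQ vec_nth)
      moreover have "reach p n (j, (snd c)(r := Suc (snd c r)))" using reach_step[OF rc] st by simp
      ultimately show ?thesis unfolding InvA_def x' qv_def by fastforce
    next
      case (Dec r jz jnz)
      have rl: "r < K" using rlt Dec by simp
      have x': "x' = (if W (Suc r) = 0 then VZ (fst c) else VN (fst c))"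
        using ev x2 True Dec by (simp add: eveN_def chooseE_def)
      show ?thesis
      proof (cases "W (Suc r) = 0")
        case True
        then have x'': "x' = VZ (fst c)" using x' by simp
        have r0: "snd c r = 0" using True sm rl by (simp add: sim_def)
        have "sim K n (snd c) W'" using sm W' x2 x'' \<open>fst c < length p\<close> Dec by (auto simp: sim_def wv_VQ vec_nth)
        then show ?thesis unfolding InvA_def using x'' rc \<open>fst c < length p\<close> Dec r0 by blast
      next
        case False
        then have x'': "x' = VN (fst c)" using x' by simp
        have r0: "snd c r \<noteq> 0" using False sm rl by (simp add: sim_def)
        have "W' 0 = int n \<and> (\<forall>j<K. W' (Suc j) = int (snd c j) - (if j = r then 1 else 0))"
          using sm W' x2 x'' \<open>fst c < length p\<close> Dec by (auto simp: sim_def wv_VQ vec_nth)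
        then show ?thesis unfolding InvA_def using x'' rc \<open>fst c < length p\<close> Dec r0 by blast
      qed
    qed
  qed
next
  fix c r jz jnz assume rc: "reach p n c" and lt: "fst c < length p" and pd: "p ! fst c = Dec r jz jnz"
    and r0: "snd c r = 0" and x: "x = VZ (fst c)" and sm: "sim K n (snd c) W"
  have WW: "\<forall>j<Suc K. W' j = W j" using W' x by (simp add: wv_VZ vec_nth)
  have rlt: "r < K" using ro lt pd by (metis ireg.simps(2) regs_ok_def)
  have "x' = qv p jz \<or> x' = VH (GZ r)" using xs x pd by (simp add: succs_def)
  then show ?thesis
  proof
    assume x'': "x' = qv p jz"
    have st: "step p c = (jz, snd c)" using step_Dec_c[OF lt pd] r0 by simp
    have "sim K n (snd c) W'" using sm WW by (simp add: sim_def)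
    moreover have "reach p n (jz, snd c)" using reach_step[OF rc] st by simp
    ultimately show ?thesis unfolding InvA_def x'' qv_def by fastforce
  next
    assume x'': "x' = VH (GZ r)"
    have "good n (GZ r) W'" using WW sm r0 rlt by (simp add: sim_def)
    then show ?thesis unfolding InvA_def using x'' rlt by (auto simp: okg_def)
  qed
next
  fix c r jz jnz assume rc: "reach p n c" and lt: "fst c < length p" and pd: "p ! fst c = Dec r jz jnz"
    and r0: "snd c r \<noteq> 0" and x: "x = VN (fst c)" and w0: "W 0 = int n"
    and wj: "\<forall>j<K. W (Suc j) = int (snd c j) - (if j = r then 1 else 0)"
  have WW: "\<forall>j<Suc K. W' j = W j" using W' x by (simp add: wv_VN vec_nth)
  have rlt: "r < K" using ro lt pd by (metis ireg.simps(2) regs_ok_def)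
  have "x' = qv p jnz \<or> x' = VH (GP r)" using xs x pd by (simp add: succs_def)
  then show ?thesis
  proof
    assume x'': "x' = qv p jnz"
    have st: "step p c = (jnz, (snd c)(r := snd c r - 1))" using step_Dec_c[OF lt pd] r0 by simp
    have "sim K n ((snd c)(r := snd c r - 1)) W'" using w0 wj WW r0 by (auto simp: sim_def of_nat_diff)
    moreover have "reach p n (jnz, (snd c)(r := snd c r - 1))" using reach_step[OF rc] st by simp
    ultimately show ?thesis unfolding InvA_def x'' qv_def by fastforce
  next
    assume x'': "x' = VH (GP r)"
    have "good n (GP r) W'" using WW w0 wj r0 rlt by auto
    then show ?thesis unfolding InvA_def using x'' rlt by (auto simp: okg_def)
  qed
next
  fix g assume ok: "okg K g" and gd: "good n g W" and x: "x = VH g"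
  have x': "x' = chooseE p K n (VH g) W" using ev x by (simp add: eveN_def)
  show ?thesis by (rule InvA_hub_step[OF ok gd x']) (use W' x in simp)
next
  fix g j s assume ok: "okg K g" and gd: "good n g W" and x: "x = VM g j s"
  then have x': "x' = VH g" using xs by (simp add: succs_def)
  have "\<forall>j<Suc K. W' j = W j" using W' x by (simp add: wv_VM vec_nth)
  then have "good n g W'" using good_keep[OF ok gd] by blast
  then show ?thesis unfolding InvA_def using x' ok by blast
next
  assume x: "x = VT" and w0: "W 0 = int n" and wj: "\<forall>j<K. W (Suc j) = 0"
  then have x': "x' = VT" using xs by (simp add: succs_def)
  have "\<forall>j<Suc K. W' j = W j" using W' x by (simp add: wv_VT vec_nth)
  then show ?thesis unfolding InvA_def using x' w0 wj by auto
qed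


definition pot :: "nat \<Rightarrow> (nat \<Rightarrow> int) \<Rightarrow> nat" where
  "pot K W = (\<Sum>j<K. nat \<bar>W (Suc j)\<bar>)"

lemma pot_dec:
  assumes j: "j < K" and r: "red s (W (Suc j))"
    and w: "\<forall>i<Suc K. W' i = W i + (if i = Suc j then (if s then 1 else -1) else 0)"
  shows "pot K W' < pot K W"
  unfolding pot_def
proof (rule sum_strict_mono_ex1)
  show "\<forall>x\<in>{..<K}. nat \<bar>W' (Suc x)\<bar> \<le> nat \<bar>W (Suc x)\<bar>"
  proof
    fix x assume "x \<in> {..<K}"
    then show "nat \<bar>W' (Suc x)\<bar> \<le> nat \<bar>W (Suc x)\<bar>" using w r by (auto simp: red_def split: if_splits)
  qed
  show "\<exists>a\<in>{..<K}. nat \<bar>W' (Suc a)\<bar> < nat \<bar>W (Suc a)\<bar>"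
    using j w r by (intro bexI[of _ j]) (auto simp: red_def split: if_splits)
qed simp

definition halted_from :: "instr list \<Rightarrow> config \<Rightarrow> bool" where
  "halted_from p c \<longleftrightarrow> (\<exists>d. length p \<le> fst ((step p ^^ d) c))"

definition rem :: "instr list \<Rightarrow> config \<Rightarrow> nat" where
  "rem p c = (LEAST d. length p \<le> fst ((step p ^^ d) c))"

lemma reach_halted_from: assumes h: "halts p n" and r: "reach p n c" shows "halted_from p c"
proof -
  obtain t where t: "(step p ^^ t) (0, R0 n) = c" using r unfolding reach_def by blast
  obtain T where T: "length p \<le> fst ((step p ^^ T) (0, R0 n))" using h unfolding halts_def by blast
  have "(step p ^^ T) c = (step p ^^ (T + t)) (0, R0 n)"
    unfolding t[symmetric] by (simp add: funpow_add)
  also have "\<dots> = (step p ^^ (t + T)) (0, R0 n)" by (simp add: add.commute)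
  also have "\<dots> = (step p ^^ t) ((step p ^^ T) (0, R0 n))" by (simp add: funpow_add)
  also have "\<dots> = (step p ^^ T) (0, R0 n)" by (rule steps_halted[OF T])
  finally show ?thesis unfolding halted_from_def using T by metis
qed

lemma rem_step: assumes h: "halted_from p c" and lt: "fst c < length p"
  shows "halted_from p (step p c) \<and> rem p (step p c) < rem p c"
proof -
  have ex: "\<exists>d. length p \<le> fst ((step p ^^ d) c)" using h unfolding halted_from_def .
  let ?d = "rem p c"
  have d: "length p \<le> fst ((step p ^^ ?d) c)" unfolding rem_def by (rule LeastI_ex[OF ex])
  have "?d \<noteq> 0"
  proof
    assume "?d = 0" then show False using d lt by simp
  qed
  then obtain d1 where d1: "?d = Suc d1" by (cases ?d) auto
  have "(step p ^^ Suc d1) c = (step p ^^ d1) (step p c)" by (metis funpow_Suc_right comp_apply)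
  then have h1: "length p \<le> fst ((step p ^^ d1) (step p c))" using d d1 by simp
  then have "rem p (step p c) \<le> d1" unfolding rem_def by (rule Least_le)
  then show ?thesis using h1 d1 unfolding halted_from_def by auto
qed




lemma halts_win:
  assumes ro: "regs_ok p K" and h: "halts p n"
  shows "Eve_wins_equality (inst p K n)"
proof -
  let ?I = "inst p K n"
  define sE where "sE h = idx p K (chooseE p K n (nm p K (last h)) (hw ?I h))" for h
  have sE: "strategy_Eve ?I sE" unfolding strategy_Eve_def
  proof (intro allI impI)
    fix h assume h: "h \<noteq> []" "last h < num_v ?I" "is_Eve ?I (last h)"
    let ?x = "nm p K (last h)"
    have lt: "last h < length (verts p K)" using h by simp
    have ne: "eveN ?x" using h(3) E3[OF lt] by simp
    have c: "chooseE p K n ?x (hw ?I h) \<in> set (succs p K ?x)" by (rule chooseE_in[OF ne])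
    have okc: "okv p K (chooseE p K n ?x (hw ?I h))" using succs_in[OF ro okv_nm[OF lt] c] .
    show "(last h, sE h) \<in> edge_set ?I" unfolding sE_def
      using E1[OF ro lt] c okc idx_lt nm_idx by metis
  qed
  have win: "cost ?I (outcome ?I sE sA (init ?I)) = Some (thr ?I)" if sA: "strategy_Adam ?I sA" for sA
  proof -
    define \<pi> where "\<pi> = outcome ?I sE sA (init ?I)"
    note pf = play_facts[OF ro sE sA \<pi>_def]
    let ?W = "Wt ?I \<pi>"
    have lt: "\<pi> k < length (verts p K)" for k using pf by blast
    have sc: "nm p K (\<pi> (Suc k)) \<in> set (succs p K (nm p K (\<pi> k)))" for k using pf by blast
    have wu: "\<forall>j<Suc K. ?W (Suc k) j = ?W k j + wv p K (nm p K (\<pi> k)) (nm p K (\<pi> (Suc k))) ! j" for k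
      using pf by blast
    have ev: "nm p K (\<pi> (Suc k)) = chooseE p K n (nm p K (\<pi> k)) (?W k)" if ne: "eveN (nm p K (\<pi> k))" for k
    proof -
      have hw: "hw ?I (out_hist ?I sE sA (init ?I) k) = ?W k"
        using hw_out_hist \<pi>_def by blast
      have lh: "last (out_hist ?I sE sA (init ?I) k) = \<pi> k" using last_out_hist \<pi>_def by simp
      have "\<pi> (Suc k) = sE (out_hist ?I sE sA (init ?I) k)" using pf[of k] ne by simp
      also have "\<dots> = idx p K (chooseE p K n (nm p K (last (out_hist ?I sE sA (init ?I) k))) (hw ?I (out_hist ?I sE sA (init ?I) k)))"
        by (simp only: sE_def)
      also have "\<dots> = idx p K (chooseE p K n (nm p K (\<pi> k)) (?W k))" by (simp only: lh hw)
      finally have e: "\<pi> (Suc k) = idx p K (chooseE p K n (nm p K (\<pi> k)) (?W k))" .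
      have "okv p K (chooseE p K n (nm p K (\<pi> k)) (?W k))"
        using succs_in[OF ro okv_nm[OF lt] chooseE_in[OF ne]] .
      then show ?thesis using e nm_idx by simp
    qed
    have inv: "InvA p K n (nm p K (\<pi> k)) (?W k)" for k
    proof (induction k)
      case 0
      have "sim K 0 (R0 0) (?W 0)" by (simp add: sim_def R0_def)
      then show ?case using play_0[OF \<pi>_def] unfolding InvA_def by auto
    next
      case (Suc k)
      show ?case by (rule InvA_step[OF ro Suc okv_nm[OF lt] sc ev wu])
    qed
    have gad: "\<forall>k g. pot K (?W k) = d \<longrightarrow> nm p K (\<pi> k) = VH g \<longrightarrow> (\<exists>l. nm p K (\<pi> l) = VT)" for d
    proof (induction d rule: less_induct)
      case (less d)
      show ?case
      proof (intro allI impI)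
        fix k g assume pk: "pot K (?W k) = d" and x: "nm p K (\<pi> k) = VH g"
        have e1: "nm p K (\<pi> (Suc k)) = chooseE p K n (VH g) (?W k)" using ev[of k] x by (simp add: eveN_def)
        show "\<exists>l. nm p K (\<pi> l) = VT"
        proof (cases "\<exists>js. redex K g (?W k) js")
          case False
          then have "nm p K (\<pi> (Suc k)) = VT" using e1 by (simp add: chooseE_def)
          then show ?thesis by blast
        next
          case True
          let ?js = "SOME js. redex K g (?W k) js"
          obtain j s where js: "?js = (j, s)" by (cases ?js)
          have rx: "redex K g (?W k) (j, s)" using someI_ex[OF True] js by simp
          have x1: "nm p K (\<pi> (Suc k)) = VM g j s" using e1 True js by (simp add: chooseE_def Let_def)
          have w1: "\<forall>i<Suc K. ?W (Suc k) i = ?W k i + (if i = Suc j then (if s then 1 else -1) else 0)"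
            using wu[of k] x x1 by (auto simp: wv_VH_VM vec_nth)
          have x2: "nm p K (\<pi> (Suc (Suc k))) = VH g" using sc[of "Suc k"] x1 by (simp add: succs_def)
          have w2: "\<forall>i<Suc K. ?W (Suc (Suc k)) i = ?W (Suc k) i" using wu[of "Suc k"] x1 by (simp add: wv_VM vec_nth)
          have "pot K (?W (Suc k)) < pot K (?W k)"
            by (rule pot_dec[OF _ _ w1]) (use rx in \<open>auto simp: redex_def\<close>)
          moreover have "pot K (?W (Suc (Suc k))) = pot K (?W (Suc k))"
            unfolding pot_def using w2 by (intro sum.cong) auto
          ultimately have "pot K (?W (Suc (Suc k))) < d" using pk by simp
          then show ?thesis using less.IH x2 by blast
        qed
      qed
    qed
    have gadget: "nm p K (\<pi> k) = VH g \<Longrightarrow> \<exists>l. nm p K (\<pi> l) = VT" for k g using gad by blast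
    have simu: "\<forall>k c. rem p c = d \<longrightarrow> reach p n c \<longrightarrow> nm p K (\<pi> k) = VQ (min (fst c) (length p))
        \<longrightarrow> sim K n (snd c) (?W k) \<longrightarrow> (\<exists>l. nm p K (\<pi> l) = VT)" for d
    proof (induction d rule: less_induct)
      case (less d)
      show ?case
      proof (intro allI impI)
        fix k c assume rd: "rem p c = d" and rc: "reach p n c" and x: "nm p K (\<pi> k) = VQ (min (fst c) (length p))"
          and sm: "sim K n (snd c) (?W k)"
        show "\<exists>l. nm p K (\<pi> l) = VT"
        proof (cases "fst c < length p")
          case False
          then have "nm p K (\<pi> (Suc k)) = VH GF" using sc[of k] x by (simp add: succs_def)
          then show ?thesis using gadget by blast
        next
          case True
          have hf: "halted_from p c" by (rule reach_halted_from[OF h rc])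
          have rs: "rem p (step p c) < d" "reach p n (step p c)" using rem_step[OF hf True] rd reach_step[OF rc] by auto
          have x0: "nm p K (\<pi> k) = VQ (fst c)" using x True by simp
          have rlt: "ireg (p ! fst c) < K" using ro True by (simp add: regs_ok_def)
          show ?thesis
          proof (cases "p ! fst c")
            case (Inc r j)
            have x1: "nm p K (\<pi> (Suc k)) = qv p j" using sc[of k] x0 True Inc by (simp add: succs_def)
            have st: "step p c = (j, (snd c)(r := Suc (snd c r)))" by (rule step_Inc_c[OF True Inc])
            have "sim K n (snd (step p c)) (?W (Suc k))"
              using sm wu[of k] x0 True Inc rlt st by (auto simp: sim_def wv_VQ vec_nth)
            moreover have "nm p K (\<pi> (Suc k)) = VQ (min (fst (step p c)) (length p))" using x1 st by (simp add: qv_def)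
            ultimately show ?thesis using less.IH rs by blast
          next
            case (Dec r jz jnz)
            have rl: "r < K" using rlt Dec by simp
            have e1: "nm p K (\<pi> (Suc k)) = (if ?W k (Suc r) = 0 then VZ (fst c) else VN (fst c))"
              using ev[of k] x0 True Dec by (simp add: eveN_def chooseE_def)
            show ?thesis
            proof (cases "snd c r = 0")
              case True
              have x1: "nm p K (\<pi> (Suc k)) = VZ (fst c)" using e1 True sm rl by (simp add: sim_def)
              have w1: "\<forall>i<Suc K. ?W (Suc k) i = ?W k i" using wu[of k] x0 x1 \<open>fst c < length p\<close> Dec
                by (simp add: wv_VQ vec_nth)
              have "nm p K (\<pi> (Suc (Suc k))) = qv p jz \<or> nm p K (\<pi> (Suc (Suc k))) = VH (GZ r)"
                using sc[of "Suc k"] x1 Dec by (simp add: succs_def)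
              then show ?thesis
              proof
                assume x2: "nm p K (\<pi> (Suc (Suc k))) = qv p jz"
                have w2: "\<forall>i<Suc K. ?W (Suc (Suc k)) i = ?W (Suc k) i" using wu[of "Suc k"] x1 by (simp add: wv_VZ vec_nth)
                have st: "step p c = (jz, snd c)" using step_Dec_c[OF \<open>fst c < length p\<close> Dec] True by simp
                have "sim K n (snd (step p c)) (?W (Suc (Suc k)))" using sm w1 w2 st by (simp add: sim_def)
                moreover have "nm p K (\<pi> (Suc (Suc k))) = VQ (min (fst (step p c)) (length p))" using x2 st by (simp add: qv_def)
                ultimately show ?thesis using less.IH rs by blast
              next
                assume "nm p K (\<pi> (Suc (Suc k))) = VH (GZ r)"
                then show ?thesis using gadget by blast
              qed
            next
              case False
              have x1: "nm p K (\<pi> (Suc k)) = VN (fst c)" using e1 False sm rl by (simp add: sim_def)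
              have w1: "\<forall>i<Suc K. ?W (Suc k) i = ?W k i - (if i = Suc r then 1 else 0)" using wu[of k] x0 x1 \<open>fst c < length p\<close> Dec
                by (simp add: wv_VQ vec_nth)
              have "nm p K (\<pi> (Suc (Suc k))) = qv p jnz \<or> nm p K (\<pi> (Suc (Suc k))) = VH (GP r)"
                using sc[of "Suc k"] x1 Dec by (simp add: succs_def)
              then show ?thesis
              proof
                assume x2: "nm p K (\<pi> (Suc (Suc k))) = qv p jnz"
                have w2: "\<forall>i<Suc K. ?W (Suc (Suc k)) i = ?W (Suc k) i" using wu[of "Suc k"] x1 by (simp add: wv_VN vec_nth)
                have st: "step p c = (jnz, (snd c)(r := snd c r - 1))" using step_Dec_c[OF \<open>fst c < length p\<close> Dec] False by simp
                have "sim K n (snd (step p c)) (?W (Suc (Suc k)))" using sm w1 w2 st False by (auto simp: sim_def of_nat_diff)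
                moreover have "nm p K (\<pi> (Suc (Suc k))) = VQ (min (fst (step p c)) (length p))" using x2 st by (simp add: qv_def)
                ultimately show ?thesis using less.IH rs by blast
              next
                assume "nm p K (\<pi> (Suc (Suc k))) = VH (GP r)"
                then show ?thesis using gadget by blast
              qed
            qed
          qed
        qed
      qed
    qed
    have pump: "\<forall>k m. n - m = d \<longrightarrow> m \<le> n \<longrightarrow> nm p K (\<pi> k) = VP \<longrightarrow> sim K m (R0 m) (?W k) \<longrightarrow> (\<exists>l. nm p K (\<pi> l) = VT)" for d
    proof (induction d)
      case 0
      show ?case
      proof (intro allI impI)
        fix k m assume "n - m = 0" "m \<le> n" and x: "nm p K (\<pi> k) = VP" and sm: "sim K m (R0 m) (?W k)"
        then have mn: "m = n" by simp
        have x1: "nm p K (\<pi> (Suc k)) = VQ 0" using ev[of k] x sm mn by (simp add: eveN_def chooseE_def sim_def)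
        have w1: "\<forall>i<Suc K. ?W (Suc k) i = ?W k i" using wu[of k] x x1 by (simp add: wv_VP vec_nth)
        have "sim K n (snd (0, R0 n)) (?W (Suc k))" using sm w1 mn by (simp add: sim_def)
        then show "\<exists>l. nm p K (\<pi> l) = VT" using simu x1 reach_0[of p n] by fastforce
      qed
    next
      case (Suc d)
      show ?case
      proof (intro allI impI)
        fix k m assume d: "n - m = Suc d" "m \<le> n" and x: "nm p K (\<pi> k) = VP" and sm: "sim K m (R0 m) (?W k)"
        then have mn: "m < n" by simp
        have x1: "nm p K (\<pi> (Suc k)) = VP" using ev[of k] x sm mn by (simp add: eveN_def chooseE_def sim_def)
        have "sim K (Suc m) (R0 (Suc m)) (?W (Suc k))"
          using sm wu[of k] x x1 by (auto simp: sim_def wv_VP vec_nth R0_def)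
        moreover have "n - Suc m = d" "Suc m \<le> n" using d by auto
        ultimately show "\<exists>l. nm p K (\<pi> l) = VT" using Suc.IH x1 by blast
      qed
    qed
    have "\<exists>l. nm p K (\<pi> l) = VT"
      by (rule pump[of "n - 0", rule_format, of 0 0]) (simp_all add: play_0[OF \<pi>_def] sim_def R0_def)
    then have ex: "\<exists>l. \<pi> l \<in> set (target ?I)" using E4 lt by blast
    define l where "l = (LEAST l. \<pi> l \<in> set (target ?I))"
    have l: "\<pi> l \<in> set (target ?I)" unfolding l_def using ex by (rule LeastI_ex)
    have "nm p K (\<pi> l) = VT" using E4 l lt by blast
    then have wl: "?W l 0 = int n" "\<forall>j<K. ?W l (Suc j) = 0" using inv[of l] unfolding InvA_def by auto
    have "map (\<lambda>i. ?W l i) [0..<Suc K] = int n # replicate K 0"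
    proof (rule nth_equalityI)
      show "length (map (\<lambda>i. ?W l i) [0..<Suc K]) = length (int n # replicate K 0)" by simp
      fix i assume "i < length (map (\<lambda>i. ?W l i) [0..<Suc K])"
      then have i: "i < Suc K" by simp
      show "map (\<lambda>i. ?W l i) [0..<Suc K] ! i = (int n # replicate K 0) ! i"
      proof (cases i)
        case 0 then show ?thesis using wl by (simp del: upt_Suc)
      next
        case (Suc j) then show ?thesis using wl i by (simp del: upt_Suc)
      qed
    qed
    then show ?thesis using ex unfolding cost_def \<pi>_def[symmetric] l_def[symmetric] Wt_def
      by (simp add: thr_inst Let_def del: upt_Suc)
  qed
  show ?thesis unfolding Eve_wins_equality_def using sE win by blast
qed




lemma enc_ints_inj: "enc_ints xs = enc_ints ys \<Longrightarrow> xs = ys"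
  unfolding enc_ints_def list_encode_eq by (simp add: inj_map_eq_map inj_on_def int_encode_eq)

lemma encode_instance_inj: assumes e: "encode_instance I = encode_instance J" shows "I = J"
proof -
  have l: "[num_v I, list_encode (map (\<lambda>b. if b then 1 else 0) (owner I)),
       list_encode (map (\<lambda>(u, v, ws). list_encode [u, v, enc_ints ws]) (edges I)),
       list_encode (target I), init I, enc_ints (thr I)] =
     [num_v J, list_encode (map (\<lambda>b. if b then 1 else 0) (owner J)),
       list_encode (map (\<lambda>(u, v, ws). list_encode [u, v, enc_ints ws]) (edges J)),
       list_encode (target J), init J, enc_ints (thr J)]"
    using e unfolding encode_instance_def list_encode_eq .
  have 1: "num_v I = num_v J" "init I = init J" using l by simp_all
  have 2: "owner I = owner J"
  proof -
    have "map (\<lambda>b. if b then (1::nat) else 0) (owner I) = map (\<lambda>b. if b then 1 else 0) (owner J)"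
      using l by (simp add: list_encode_eq)
    moreover have "inj (\<lambda>b. if b then (1::nat) else 0)" by (auto simp: inj_on_def)
    ultimately show ?thesis by (simp add: inj_map_eq_map)
  qed
  have 3: "edges I = edges J"
  proof -
    have "map (\<lambda>(u, v, ws). list_encode [u, v, enc_ints ws]) (edges I) = map (\<lambda>(u, v, ws). list_encode [u, v, enc_ints ws]) (edges J)"
      using l by (simp add: list_encode_eq)
    moreover have "inj (\<lambda>(u::nat, v::nat, ws). list_encode [u, v, enc_ints ws])"
      by (auto simp: inj_on_def list_encode_eq dest: enc_ints_inj)
    ultimately show ?thesis by (simp add: inj_map_eq_map)
  qed
  have 4: "target I = target J" using l by (simp add: list_encode_eq)
  have 5: "thr I = thr J" using l enc_ints_inj by simp
  show ?thesis using 1 2 3 4 5 by (cases I, cases J) simp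
qed

lemma rfun_inst: "rfun (encode_instance (inst p K 0)) = encode_instance (inst p K (encode_instance (inst p K 0)))"
proof -
  define e where "e = encode_instance (inst p K 0)"
  define a1 where "a1 = list_encode (map (\<lambda>b. if b then 1 else 0) (owner (inst p K 0)))"
  define a2 where "a2 = list_encode (map (\<lambda>(u, v, ws). list_encode [u, v, enc_ints ws]) (edges (inst p K 0)))"
  define a3 where "a3 = list_encode (target (inst p K 0))"
  have o: "owner (inst p K m) = owner (inst p K 0)" "edges (inst p K m) = edges (inst p K 0)"
    "target (inst p K m) = target (inst p K 0)" "init (inst p K m) = init (inst p K 0)"
    "num_v (inst p K m) = num_v (inst p K 0)" for m
    by (simp_all add: inst_def)
  have ie: "int_encode (int m) = m + m" for m by (simp add: int_encode_def sum_encode_def)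
  have "e = list_encode [num_v (inst p K 0), a1, a2, a3, init (inst p K 0), list_encode (int_encode 0 # map int_encode (replicate K 0))]"
    unfolding e_def encode_instance_def a1_def a2_def a3_def enc_ints_def by (simp add: thr_inst)
  then have "rfun e = list_encode [num_v (inst p K 0), a1, a2, a3, init (inst p K 0), list_encode ((e + e) # map int_encode (replicate K 0))]"
    by (rule rfun_enc)
  also have "\<dots> = encode_instance (inst p K e)"
    unfolding encode_instance_def a1_def a2_def a3_def enc_ints_def o[of e] by (simp add: thr_inst ie)
  finally show ?thesis unfolding e_def .
qed

theorem theorem14:
  shows "\<not> decidable_set EqualitySP"
proof
  assume "decidable_set EqualitySP"
  then obtain f where f: "\<forall>x. (x \<in> EqualitySP \<longrightarrow> eval f [x] 0) \<and> (x \<notin> EqualitySP \<longrightarrow> eval f [x] 1)"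
    unfolding decidable_set_def by blast
  define g where "g = Cn f [rF]"
  have g: "eval g [x] (if rfun x \<in> EqualitySP then 0 else 1)" for x
    unfolding g_def by (rule eval_Cn1[OF eval_rF]) (use f in auto)
  define p where "p = prog g"
  define K where "K = Kp p"
  have ro: "regs_ok p K" unfolding regs_ok_def K_def using ireg_lt_Kp by blast
  define e where "e = encode_instance (inst p K 0)"
  have re: "rfun e = encode_instance (inst p K e)" unfolding e_def by (rule rfun_inst)
  have mem: "rfun e \<in> EqualitySP \<longleftrightarrow> Eve_wins_equality (inst p K e)"
  proof
    assume "rfun e \<in> EqualitySP"
    then obtain J where J: "rfun e = encode_instance J" "well_formed J" "Eve_wins_equality J"
      unfolding EqualitySP_def by blast
    have "J = inst p K e" using encode_instance_inj J(1) re by simp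
    then show "Eve_wins_equality (inst p K e)" using J by simp
  next
    assume "Eve_wins_equality (inst p K e)"
    then show "rfun e \<in> EqualitySP" unfolding EqualitySP_def re using wf_inst[OF ro] by blast
  qed
  have wh: "Eve_wins_equality (inst p K e) \<longleftrightarrow> halts p e"
    using halts_win[OF ro] not_halts_lose[OF ro] by blast
  have hp: "halts p e \<longleftrightarrow> (if rfun e \<in> EqualitySP then 0 else 1) \<noteq> (0::nat)"
    unfolding p_def by (rule prog_halts[OF g])
  show False using mem wh hp by (cases "rfun e \<in> EqualitySP") auto
qed



end
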